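(* For every $\beta \in \{\mathbf{G}, \mathbf{Psd}, \mathbf{Sd}\}$, $[\tau(\mathbf{SemWb})\mathbf{Txt}\beta\mathbf{Bc}] = [\tau(\mathbf{SemConv})\mathbf{Txt}\beta\mathbf{Bc}]$.
   Context: Fix an acceptable numbering $(\varphi_e)$ of partial computable functions, $W_e=\mathrm{dom}(\varphi_e)$. A text is a total function $T:\mathbb N\to\mathbb N\cup\{\#\}$, $\mathrm{content}(T)=\mathrm{range}(T)\setminus\{\#\}$, $T[n]=(T(0),\dots,T(n-1))$; $\mathbf{Txt}$ is the set of all texts, $\mathbf{Txt}(L)$ those with content $L$. Learners are partial computable functions; $\mathbf G(h,T)(i)=h(T[i])$, $\mathbf{Psd}(h,T)(i)=h(\mathrm{content}(T[i]),i)$, $\mathbf{Sd}(h,T)(i)=h(\mathrm{content}(T[i]))$. For total $p:\mathbb N\to\mathbb N$ and text $T$: $\mathbf{Bc}(p,T)$ iff $\exists n_0\,\forall n\ge n_0: W_{p(n)}=\mathrm{content}(T)$; $\mathbf{SemWb}(p,T)$ iff for all $n,m$: if there is $k$ with $n\le k\le m$ and $W_{p(n)}\ne W_{p(k)}$, then $(\mathrm{content}(T[m])\cap W_{p(m)})\setminus W_{p(n)}\ne\emptyset$; $\mathbf{SemConv}(p,T)$ iff for all $n<m$ with $\mathrm{content}(T[m])\subseteq W_{p(n)}$ we have $W_{p(n)}=W_{p(m)}$. A learner $h$ $\tau(\alpha)\mathbf{Txt}\beta\mathbf{Bc}$-learns $L$ iff for every $T\in\mathbf{Txt}$, $\beta(h,T)$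 is total and $\alpha(\beta(h,T),T)$ holds, and for every $T\in\mathbf{Txt}(L)$, $\mathbf{Bc}(\beta(h,T),T)$ holds. $[\cdot]$ is the set of classes learnable by a single learner under the criterion. *)

theory Defs
  imports Main "HOL-Library.Nat_Bijection"
begin

datatype recf =
    Z
  | S
  | Id nat
  | Cn recf "recf list"
  | Pr recf recf
  | Mn recf

inductive eval :: "recf \<Rightarrow> nat list \<Rightarrow> nat \<Rightarrow> bool" where
  eval_Z: "eval Z xs 0"
| eval_S: "eval S (x # xs) (Suc x)"
| eval_Id: "i < length xs \<Longrightarrow> eval (Id i) xs (xs ! i)"
| eval_Cn: "length zs = length gs \<Longrightarrow> (\<forall>i<length gs. eval (gs ! i) xs (zs ! i))
             \<Longrightarrow> eval f zs y \<Longrightarrow> eval (Cn f gs) xs y"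
| eval_Pr0: "eval f xs y \<Longrightarrow> eval (Pr f g) (0 # xs) y"
| eval_PrS: "eval (Pr f g) (x # xs) z \<Longrightarrow> eval g (x # z # xs) y
             \<Longrightarrow> eval (Pr f g) (Suc x # xs) y"
| eval_Mn: "eval f (x # xs) 0 \<Longrightarrow> (\<forall>y<x. \<exists>z. z \<noteq> 0 \<and> eval f (y # xs) z)
             \<Longrightarrow> eval (Mn f) xs x"

definition computable :: "(nat \<Rightarrow> nat option) \<Rightarrow> bool" where
  "computable f \<longleftrightarrow> (\<exists>r. \<forall>x y. f x = Some y \<longleftrightarrow> eval r [x] y)"

definition computable_numbering :: "(nat \<Rightarrow> nat \<Rightarrow> nat option) \<Rightarrow> bool" where
  "computable_numbering \<psi> \<longleftrightarrow>
     computable (\<lambda>n. \<psi> (fst (prod_decode n)) (snd (prod_decode n)))"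

definition acceptable :: "(nat \<Rightarrow> nat \<Rightarrow> nat option) \<Rightarrow> bool" where
  "acceptable \<phi> \<longleftrightarrow> computable_numbering \<phi> \<and>
     (\<forall>\<psi>. computable_numbering \<psi> \<longrightarrow>
        (\<exists>t. computable (\<lambda>x. Some (t x)) \<and> (\<forall>e. \<psi> e = \<phi> (t e))))"

definition W :: "(nat \<Rightarrow> nat \<Rightarrow> nat option) \<Rightarrow> nat \<Rightarrow> nat set" where
  "W \<phi> e = dom (\<phi> e)"

text \<open>A text is a total function nat => nat option; None plays the role of the pause symbol #.\<close>
type_synonym txtT = "nat \<Rightarrow> nat option"

definition content :: "txtT \<Rightarrow> nat set" where
  "content T = {x. \<exists>i. T i = Some x}"

definition content_init :: "txtT \<Rightarrow> nat \<Rightarrow> nat set" where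
  "content_init T n = {x. \<exists>i<n. T i = Some x}"

definition init_seg :: "txtT \<Rightarrow> nat \<Rightarrow> nat option list" where
  "init_seg T n = map T [0..<n]"

definition seq_code :: "nat option list \<Rightarrow> nat" where
  "seq_code xs = list_encode (map (\<lambda>c. case c of None \<Rightarrow> 0 | Some n \<Rightarrow> Suc n) xs)"

definition G_op :: "(nat \<Rightarrow> nat option) \<Rightarrow> txtT \<Rightarrow> nat \<Rightarrow> nat option" where
  "G_op h T i = h (seq_code (init_seg T i))"

definition Psd_op :: "(nat \<Rightarrow> nat option) \<Rightarrow> txtT \<Rightarrow> nat \<Rightarrow> nat option" where
  "Psd_op h T i = h (prod_encode (set_encode (content_init T i), i))"

definition Sd_op :: "(nat \<Rightarrow> nat option) \<Rightarrow> txtT \<Rightarrow> nat \<Rightarrow> nat option" where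
  "Sd_op h T i = h (set_encode (content_init T i))"

definition Bc :: "(nat \<Rightarrow> nat \<Rightarrow> nat option) \<Rightarrow> (nat \<Rightarrow> nat) \<Rightarrow> txtT \<Rightarrow> bool" where
  "Bc \<phi> p T \<longleftrightarrow> (\<exists>n0. \<forall>n\<ge>n0. W \<phi> (p n) = content T)"

definition SemWb :: "(nat \<Rightarrow> nat \<Rightarrow> nat option) \<Rightarrow> (nat \<Rightarrow> nat) \<Rightarrow> txtT \<Rightarrow> bool" where
  "SemWb \<phi> p T \<longleftrightarrow> (\<forall>n m. (\<exists>k. n \<le> k \<and> k \<le> m \<and> W \<phi> (p n) \<noteq> W \<phi> (p k)) \<longrightarrow>
       (content_init T m \<inter> W \<phi> (p m)) - W \<phi> (p n) \<noteq> {})"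

definition SemConv :: "(nat \<Rightarrow> nat \<Rightarrow> nat option) \<Rightarrow> (nat \<Rightarrow> nat) \<Rightarrow> txtT \<Rightarrow> bool" where
  "SemConv \<phi> p T \<longleftrightarrow> (\<forall>n m. n < m \<and> content_init T m \<subseteq> W \<phi> (p n) \<longrightarrow>
       W \<phi> (p n) = W \<phi> (p m))"

definition learns ::
  "(nat \<Rightarrow> nat \<Rightarrow> nat option) \<Rightarrow>
   ((nat \<Rightarrow> nat \<Rightarrow> nat option) \<Rightarrow> (nat \<Rightarrow> nat) \<Rightarrow> txtT \<Rightarrow> bool) \<Rightarrow>
   ((nat \<Rightarrow> nat option) \<Rightarrow> txtT \<Rightarrow> nat \<Rightarrow> nat option) \<Rightarrow>
   (nat \<Rightarrow> nat option) \<Rightarrow> nat set \<Rightarrow> bool" where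
  "learns \<phi> \<alpha> \<beta> h L \<longleftrightarrow>
     (\<forall>T::txtT. (\<forall>i. \<beta> h T i \<noteq> None) \<and> \<alpha> \<phi> (\<lambda>i. the (\<beta> h T i)) T) \<and>
     (\<forall>T::txtT. content T = L \<longrightarrow> Bc \<phi> (\<lambda>i. the (\<beta> h T i)) T)"

definition TxtBc ::
  "(nat \<Rightarrow> nat \<Rightarrow> nat option) \<Rightarrow>
   ((nat \<Rightarrow> nat \<Rightarrow> nat option) \<Rightarrow> (nat \<Rightarrow> nat) \<Rightarrow> txtT \<Rightarrow> bool) \<Rightarrow>
   ((nat \<Rightarrow> nat option) \<Rightarrow> txtT \<Rightarrow> nat \<Rightarrow> nat option) \<Rightarrow> nat set set set" where
  "TxtBc \<phi> \<alpha> \<beta> = {\<L>. \<exists>h. computable h \<and> (\<forall>L\<in>\<L>. learns \<phi> \<alpha> \<beta> h L)}"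

end

theory Submission
  imports Defs
begin

inductive_cases evalZ_E: "eval Z xs y"
inductive_cases evalS_E: "eval S xs y"
inductive_cases evalId_E: "eval (Id i) xs y"
inductive_cases evalCn_E: "eval (Cn f gs) xs y"
inductive_cases evalPr_E: "eval (Pr f g) xs y"
inductive_cases evalMn_E: "eval (Mn f) xs y"

lemma eval_det: "eval r xs y \<Longrightarrow> eval r xs y' \<Longrightarrow> y = y'"
proof (induction arbitrary: y' rule: eval.induct)
  case (eval_Z xs)
  then show ?case by (rule evalZ_E) simp
next
  case (eval_S x xs)
  then show ?case by (rule evalS_E) simp
next
  case (eval_Id i xs)
  from eval_Id.prems show ?case by (rule evalId_E) simp
next
  case (eval_Cn zs gs xs f y)
  from eval_Cn.prems obtain zs' where z': "length zs' = length gs"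
    "\<forall>i<length gs. eval (gs ! i) xs (zs' ! i)" "eval f zs' y'" by (rule evalCn_E) blast
  have "\<forall>i<length gs. zs!i = zs'!i"
  proof (intro allI impI)
    fix i assume "i < length gs"
    have a: "eval (gs ! i) xs (zs' ! i)" using z'(2) \<open>i < length gs\<close> by simp
    show "zs!i = zs'!i" using eval_Cn(3) a \<open>i < length gs\<close> by simp
  qed
  then have "zs = zs'"
    using eval_Cn.hyps(1) z'(1) by (auto intro!: nth_equalityI)
  then show ?case using eval_Cn.IH z'(3) by blast
next
  case (eval_Pr0 f xs y g)
  from eval_Pr0.prems have "eval f xs y'" by (rule evalPr_E) auto
  then show ?case using eval_Pr0.IH by blast
next
  case (eval_PrS f g x xs z y)
  from eval_PrS.prems obtain z' where "eval (Pr f g) (x # xs) z'" "eval g (x # z' # xs) y'"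
    by (rule evalPr_E) auto
  then show ?case using eval_PrS.IH by blast
next
  case (eval_Mn f x xs)
  from eval_Mn.prems obtain x' where "y' = x'" "eval f (x' # xs) 0"
     "\<forall>y<x'. \<exists>z. z \<noteq> 0 \<and> eval f (y # xs) z" by (rule evalMn_E) blast
  show ?case
  proof (rule ccontr)
    assume ne: "x \<noteq> y'"
    show False
    proof (cases "x < x'")
      case True
      then obtain z where "z \<noteq> 0" "eval f (x # xs) z" using \<open>\<forall>y<x'. _\<close> by blast
      then show False using eval_Mn(2) by blast
    next
      case False
      then have "x' < x" using ne \<open>y' = x'\<close> by simp
      then obtain z where "z \<noteq> 0" "\<forall>z'. eval f (x' # xs) z' \<longrightarrow> z = z'" using eval_Mn(3) by blast
      then show False using \<open>eval f (x' # xs) 0\<close> by blast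
    qed
  qed
qed

definition tot :: "recf \<Rightarrow> nat \<Rightarrow> (nat list \<Rightarrow> nat) \<Rightarrow> bool" where
  "tot r k f \<longleftrightarrow> (\<forall>xs. length xs = k \<longrightarrow> eval r xs (f xs))"

definition prk :: "nat \<Rightarrow> (nat list \<Rightarrow> nat) \<Rightarrow> bool" where
  "prk k f \<longleftrightarrow> (\<exists>r. tot r k f)"

lemma tot_eval_iff: "tot r k f \<Longrightarrow> length xs = k \<Longrightarrow> eval r xs y \<longleftrightarrow> y = f xs"
  unfolding tot_def using eval_det by blast

lemma prk_cong: "prk k f \<Longrightarrow> (\<And>xs. length xs = k \<Longrightarrow> f xs = g xs) \<Longrightarrow> prk k g"
  unfolding prk_def tot_def by metis

lemma prk_zero: "prk k (\<lambda>_. 0)"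
  unfolding prk_def tot_def by (auto intro: eval_Z)

lemma prk_id: "i < k \<Longrightarrow> prk k (\<lambda>xs. xs ! i)"
  unfolding prk_def tot_def by (auto intro: eval_Id)

lemma ex_rs: "\<forall>G\<in>set Gs. \<exists>r. tot r k G \<Longrightarrow>
  \<exists>rs. length rs = length Gs \<and> (\<forall>i<length Gs. tot (rs ! i) k (Gs ! i))"
proof (induction Gs)
  case Nil
  then show ?case by auto
next
  case (Cons G Gs)
  then obtain rs r where "length rs = length Gs" "\<forall>i<length Gs. tot (rs ! i) k (Gs ! i)" "tot r k G"
    by auto
  then show ?case by (intro exI[of _ "r # rs"]) (auto simp: nth_Cons split: nat.splits)
qed

lemma prk_comp: "prk (length Gs) F \<Longrightarrow> (\<forall>G\<in>set Gs. prk k G) \<Longrightarrow>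
   prk k (\<lambda>xs. F (map (\<lambda>G. G xs) Gs))"
proof -
  assume F: "prk (length Gs) F" and G: "\<forall>G\<in>set Gs. prk k G"
  from F obtain rF where rF: "tot rF (length Gs) F" unfolding prk_def by auto
  from G obtain rs where rs: "length rs = length Gs" "\<forall>i<length Gs. tot (rs ! i) k (Gs ! i)"
    using ex_rs unfolding prk_def by blast
  have "tot (Cn rF rs) k (\<lambda>xs. F (map (\<lambda>G. G xs) Gs))"
    unfolding tot_def
  proof (intro allI impI)
    fix xs :: "nat list" assume "length xs = k"
    then show "eval (Cn rF rs) xs (F (map (\<lambda>G. G xs) Gs))"
      using rs rF unfolding tot_def by (intro eval_Cn[where zs="map (\<lambda>G. G xs) Gs"]) auto
  qed
  then show ?thesis unfolding prk_def by blast
qed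

lemma prk_comp1: "prk (Suc 0) F \<Longrightarrow> prk k G \<Longrightarrow> prk k (\<lambda>xs. F [G xs])"
  using prk_comp[of "[G]" F k] by simp

lemma prk_comp2: "prk (Suc (Suc 0)) F \<Longrightarrow> prk k G1 \<Longrightarrow> prk k G2 \<Longrightarrow> prk k (\<lambda>xs. F [G1 xs, G2 xs])"
  using prk_comp[of "[G1, G2]" F k] by simp

lemma prk_comp3: "prk (Suc (Suc (Suc 0))) F \<Longrightarrow> prk k G1 \<Longrightarrow> prk k G2 \<Longrightarrow> prk k G3 \<Longrightarrow>
   prk k (\<lambda>xs. F [G1 xs, G2 xs, G3 xs])"
  using prk_comp[of "[G1, G2, G3]" F k] by simp

lemma prk_S: "prk (Suc 0) (\<lambda>xs. Suc (xs ! 0))"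
  unfolding prk_def tot_def
  by (rule exI[of _ S]) (auto simp: length_Suc_conv intro: eval_S)

lemma prk_Suc: "prk k f \<Longrightarrow> prk k (\<lambda>xs. Suc (f xs))"
  using prk_comp1[OF prk_S] by simp

lemma prk_const: "prk k (\<lambda>_. c)"
  by (induction c) (auto intro: prk_zero dest: prk_Suc)

fun prec :: "(nat list \<Rightarrow> nat) \<Rightarrow> (nat list \<Rightarrow> nat) \<Rightarrow> nat \<Rightarrow> nat list \<Rightarrow> nat" where
  "prec F G 0 ys = F ys"
| "prec F G (Suc n) ys = G (n # prec F G n ys # ys)"

lemma prk_Pr: "prk k F \<Longrightarrow> prk (Suc (Suc k)) G \<Longrightarrow> prk (Suc k) (\<lambda>xs. prec F G (hd xs) (tl xs))"
proof -
  assume "prk k F" "prk (Suc (Suc k)) G"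
  then obtain rF rG where rF: "tot rF k F" and rG: "tot rG (Suc (Suc k)) G" unfolding prk_def by auto
  have "eval (Pr rF rG) (n # ys) (prec F G n ys)" if "length ys = k" for n ys
  proof (induction n)
    case 0
    then show ?case using rF that unfolding tot_def by (auto intro: eval_Pr0)
  next
    case (Suc n)
    then show ?case using rG that unfolding tot_def by (auto intro: eval_PrS)
  qed
  then have "tot (Pr rF rG) (Suc k) (\<lambda>xs. prec F G (hd xs) (tl xs))"
    unfolding tot_def by (auto simp: length_Suc_conv)
  then show ?thesis unfolding prk_def by blast
qed


lemma lift1: "prk (Suc 0) F \<Longrightarrow> (\<And>a. F [a] = H a) \<Longrightarrow> prk k f \<Longrightarrow> prk k (\<lambda>xs. H (f xs))"
  using prk_comp1[of F k f] by simp

lemma lift2: "prk (Suc (Suc 0)) F \<Longrightarrow> (\<And>a b. F [a, b] = H a b) \<Longrightarrow> prk k f \<Longrightarrow> prk k g \<Longrightarrow>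
  prk k (\<lambda>xs. H (f xs) (g xs))"
  using prk_comp2[of F k f g] by simp

lemma prk_shift: "prk (Suc k) F \<Longrightarrow> prk k N \<Longrightarrow> prk k (\<lambda>xs. F (N xs # xs))"
proof -
  assume F: "prk (Suc k) F" and N: "prk k N"
  let ?Gs = "N # map (\<lambda>j xs. xs ! j) [0..<k]"
  have A: "prk k (\<lambda>xs. F (map (\<lambda>G. G xs) ?Gs))"
    by (rule prk_comp) (use F N in \<open>auto intro: prk_id\<close>)
  have eq: "map (\<lambda>G. G xs) ?Gs = N xs # xs" if "length xs = k" for xs
    using that by (auto intro: nth_equalityI)
  show ?thesis by (rule prk_cong[OF A], subst eq, assumption, rule refl)
qed

lemma prk_drop1: "prk (Suc k) Q \<Longrightarrow> prk (Suc (Suc k)) (\<lambda>zs. Q (zs ! 0 # drop 2 zs))"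
proof -
  assume Q: "prk (Suc k) Q"
  let ?Gs = "(\<lambda>zs. zs ! 0) # map (\<lambda>j zs. zs ! (j + 2)) [0..<k]"
  have A: "prk (Suc (Suc k)) (\<lambda>zs. Q (map (\<lambda>G. G zs) ?Gs))"
    by (rule prk_comp) (use Q in \<open>auto intro: prk_id\<close>)
  have eq: "map (\<lambda>G. G zs) ?Gs = zs ! 0 # drop 2 zs" if "length zs = Suc (Suc k)" for zs
    using that by (auto intro: nth_equalityI)
  show ?thesis by (rule prk_cong[OF A], subst eq, assumption, rule refl)
qed

lemma prk_rec: "prk k F \<Longrightarrow> prk (Suc (Suc k)) G \<Longrightarrow> (\<And>ys. f 0 ys = F ys) \<Longrightarrow>
  (\<And>n ys. f (Suc n) ys = G (n # f n ys # ys)) \<Longrightarrow> prk k N \<Longrightarrow> prk k (\<lambda>xs. f (N xs) xs)"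
proof -
  assume F: "prk k F" and G: "prk (Suc (Suc k)) G" and f0: "\<And>ys. f 0 ys = F ys"
    and fS: "\<And>n ys. f (Suc n) ys = G (n # f n ys # ys)" and N: "prk k N"
  have "f n ys = prec F G n ys" for n ys by (induction n) (auto simp: f0 fS)
  then show ?thesis using prk_shift[OF prk_Pr[OF F G] N] by simp
qed

lemma prk_rec0: "prk k F \<Longrightarrow> prk (Suc (Suc k)) G \<Longrightarrow> (\<And>ys. f 0 ys = F ys) \<Longrightarrow>
  (\<And>n ys. f (Suc n) ys = G (n # f n ys # ys)) \<Longrightarrow> prk (Suc k) (\<lambda>xs. f (hd xs) (tl xs))"
proof -
  assume F: "prk k F" and G: "prk (Suc (Suc k)) G" and f0: "\<And>ys. f 0 ys = F ys"
    and fS: "\<And>n ys. f (Suc n) ys = G (n # f n ys # ys)"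
  have "f n ys = prec F G n ys" for n ys by (induction n) (auto simp: f0 fS)
  then show ?thesis using prk_Pr[OF F G] by simp
qed

lemma prk_add: "prk k f \<Longrightarrow> prk k g \<Longrightarrow> prk k (\<lambda>xs. f xs + g xs)"
proof -
  have "prk (Suc (Suc 0)) (\<lambda>xs. (\<lambda>n ys. n + ys ! 0) (hd xs) (tl xs))"
    by (rule prk_rec0[where G="\<lambda>zs. Suc (zs ! 1)" and F="\<lambda>ys. ys ! 0"]) (rule prk_id prk_Suc | simp)+
  then have "prk (Suc (Suc 0)) (\<lambda>xs. xs ! 0 + xs ! 1)"
    by (rule prk_cong) (auto simp: length_Suc_conv)
  then show "prk k f \<Longrightarrow> prk k g \<Longrightarrow> prk k (\<lambda>xs. f xs + g xs)"
    by (rule lift2) auto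
qed


lemma prk_tl: "prk k f \<Longrightarrow> prk (Suc k) (\<lambda>ys. f (tl ys))"
proof -
  assume f: "prk k f"
  let ?Gs = "map (\<lambda>j ys. ys ! (Suc j)) [0..<k]"
  have A: "prk (Suc k) (\<lambda>ys. f (map (\<lambda>G. G ys) ?Gs))"
    by (rule prk_comp) (use f in \<open>auto intro: prk_id\<close>)
  have eq: "map (\<lambda>G. G ys) ?Gs = tl ys" if "length ys = Suc k" for ys
    using that by (auto intro: nth_equalityI simp: nth_tl)
  show ?thesis by (rule prk_cong[OF A], subst eq, assumption, rule refl)
qed

lemma prk_pred: "prk k f \<Longrightarrow> prk k (\<lambda>xs. f xs - 1)"
proof -
  have "prk (Suc 0) (\<lambda>xs. (\<lambda>n ys. n - 1) (hd xs) (tl xs))"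
    by (rule prk_rec0[where G="\<lambda>zs. zs ! 0" and F="\<lambda>_. 0"]) (rule prk_id prk_const | simp)+
  then have "prk (Suc 0) (\<lambda>xs. xs ! 0 - 1)"
    by (rule prk_cong) (auto simp: length_Suc_conv)
  then show "prk k f \<Longrightarrow> prk k (\<lambda>xs. f xs - 1)"
    by (rule lift1) auto
qed

lemma prk_sub: "prk k f \<Longrightarrow> prk k g \<Longrightarrow> prk k (\<lambda>xs. f xs - g xs)"
proof -
  have "prk (Suc (Suc 0)) (\<lambda>xs. (\<lambda>n ys. ys ! 0 - n) (hd xs) (tl xs))"
    by (rule prk_rec0[where G="\<lambda>zs. zs ! 1 - 1" and F="\<lambda>ys. ys ! 0"]) (rule prk_id prk_pred | simp)+
  then have b: "prk (Suc (Suc 0)) (\<lambda>xs. xs ! 1 - xs ! 0)"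
    by (rule prk_cong) (auto simp: length_Suc_conv)
  assume "prk k f" "prk k g"
  from lift2[where H="\<lambda>a b. b - a", OF b _ this(2) this(1)] show ?thesis by simp
qed

lemma prk_mult: "prk k f \<Longrightarrow> prk k g \<Longrightarrow> prk k (\<lambda>xs. f xs * g xs)"
proof -
  have "prk (Suc (Suc 0)) (\<lambda>xs. (\<lambda>n ys. n * ys ! 0) (hd xs) (tl xs))"
    by (rule prk_rec0[where G="\<lambda>zs. zs ! 2 + zs ! 1" and F="\<lambda>_. 0"]) (rule prk_id prk_add prk_const | simp)+
  then have "prk (Suc (Suc 0)) (\<lambda>xs. xs ! 0 * xs ! 1)"
    by (rule prk_cong) (auto simp: length_Suc_conv)
  then show "prk k f \<Longrightarrow> prk k g \<Longrightarrow> prk k (\<lambda>xs. f xs * g xs)"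
    by (rule lift2) auto
qed

lemma prk_pow2: "prk k f \<Longrightarrow> prk k (\<lambda>xs. 2 ^ f xs)"
proof -
  have "prk (Suc 0) (\<lambda>xs. (\<lambda>n ys. 2 ^ n) (hd xs) (tl xs))"
    by (rule prk_rec0[where G="\<lambda>zs. zs ! 1 + zs ! 1" and F="\<lambda>_. 1"]) (rule prk_id prk_add prk_const | simp)+
  then have "prk (Suc 0) (\<lambda>xs. 2 ^ (xs ! 0))"
    by (rule prk_cong) (auto simp: length_Suc_conv)
  then show "prk k f \<Longrightarrow> prk k (\<lambda>xs. 2 ^ f xs)"
    by (rule lift1) auto
qed

lemma prk_triangle: "prk k f \<Longrightarrow> prk k (\<lambda>xs. triangle (f xs))"
proof -
  have "prk (Suc 0) (\<lambda>xs. (\<lambda>n ys. triangle n) (hd xs) (tl xs))"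
    by (rule prk_rec0[where G="\<lambda>zs. zs ! 1 + Suc (zs ! 0)" and F="\<lambda>_. 0"]) (rule prk_id prk_add prk_const prk_Suc | simp)+
  then have "prk (Suc 0) (\<lambda>xs. triangle (xs ! 0))"
    by (rule prk_cong) (auto simp: length_Suc_conv)
  then show "prk k f \<Longrightarrow> prk k (\<lambda>xs. triangle (f xs))"
    by (rule lift1) auto
qed

abbreviation prp :: "nat \<Rightarrow> (nat list \<Rightarrow> bool) \<Rightarrow> bool" where
  "prp k P \<equiv> prk k (\<lambda>xs. of_bool (P xs))"

lemma prp_le: "prk k f \<Longrightarrow> prk k g \<Longrightarrow> prp k (\<lambda>xs. f xs \<le> g xs)"
proof -
  assume "prk k f" "prk k g"
  then have "prk k (\<lambda>xs. 1 - (f xs - g xs))" by (intro prk_sub prk_const)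
  then show ?thesis by (rule prk_cong) auto
qed

lemma prp_less: "prk k f \<Longrightarrow> prk k g \<Longrightarrow> prp k (\<lambda>xs. f xs < g xs)"
proof -
  assume "prk k f" "prk k g"
  then have "prp k (\<lambda>xs. Suc (f xs) \<le> g xs)" by (intro prp_le prk_Suc)
  then show ?thesis by (rule prk_cong) auto
qed

lemma prp_eq: "prk k f \<Longrightarrow> prk k g \<Longrightarrow> prp k (\<lambda>xs. f xs = g xs)"
proof -
  assume "prk k f" "prk k g"
  then have "prk k (\<lambda>xs. 1 - ((f xs - g xs) + (g xs - f xs)))" by (intro prk_sub prk_add prk_const)
  then show ?thesis by (rule prk_cong) auto
qed

lemma prp_not: "prp k P \<Longrightarrow> prp k (\<lambda>xs. \<not> P xs)"
proof -
  assume "prp k P"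
  then have "prk k (\<lambda>xs. 1 - of_bool (P xs))" by (intro prk_sub prk_const)
  then show ?thesis by (rule prk_cong) auto
qed

lemma prp_and: "prp k P \<Longrightarrow> prp k Q \<Longrightarrow> prp k (\<lambda>xs. P xs \<and> Q xs)"
proof -
  assume "prp k P" "prp k Q"
  then have "prk k (\<lambda>xs. of_bool (P xs) * of_bool (Q xs))" by (intro prk_mult)
  then show ?thesis by (rule prk_cong) auto
qed

lemma prp_or: "prp k P \<Longrightarrow> prp k Q \<Longrightarrow> prp k (\<lambda>xs. P xs \<or> Q xs)"
proof -
  assume "prp k P" "prp k Q"
  then have "prp k (\<lambda>xs. \<not> (\<not> P xs \<and> \<not> Q xs))" by (intro prp_not prp_and)
  then show ?thesis by (rule prk_cong) auto
qed

lemma prp_imp: "prp k P \<Longrightarrow> prp k Q \<Longrightarrow> prp k (\<lambda>xs. P xs \<longrightarrow> Q xs)"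
proof -
  assume "prp k P" "prp k Q"
  then have "prp k (\<lambda>xs. \<not> P xs \<or> Q xs)" by (intro prp_not prp_or)
  then show ?thesis by (rule prk_cong) auto
qed

lemma prk_if: "prp k P \<Longrightarrow> prk k f \<Longrightarrow> prk k g \<Longrightarrow> prk k (\<lambda>xs. if P xs then f xs else g xs)"
proof -
  assume "prp k P" "prk k f" "prk k g"
  then have "prk k (\<lambda>xs. of_bool (P xs) * f xs + (1 - of_bool (P xs)) * g xs)"
    by (intro prk_add prk_mult prk_sub prk_const)
  then show ?thesis by (rule prk_cong) auto
qed

lemma prk_sum: "prk (Suc k) Q \<Longrightarrow> prk k N \<Longrightarrow> prk k (\<lambda>xs. \<Sum>i<N xs. Q (i # xs))"
proof -
  assume Q: "prk (Suc k) Q" and N: "prk k N"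
  show ?thesis
    by (rule prk_rec[where f="\<lambda>n ys. \<Sum>i<n. Q (i # ys)" and F="\<lambda>_. 0"
          and G="\<lambda>zs. zs ! 1 + Q (zs ! 0 # drop 2 zs)"])
      (auto intro: prk_const prk_add prk_id prk_drop1[OF Q] N)
qed

declare sum_of_bool_eq[simp del]

lemma sum_of_bool_0: "((\<Sum>i<(n::nat). of_bool (P i))::nat) = 0 \<longleftrightarrow> \<not> (\<exists>i<n. P i)"
  by (induction n) (auto simp: less_Suc_eq)

lemma prp_ex: "prp (Suc k) P \<Longrightarrow> prk k N \<Longrightarrow> prp k (\<lambda>xs. \<exists>i<N xs. P (i # xs))"
proof -
  assume "prp (Suc k) P" "prk k N"
  then have "prk k (\<lambda>xs. 1 - (1 - (\<Sum>i<N xs. of_bool (P (i # xs)))))"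
    by (intro prk_sub prk_const prk_sum)
  then show ?thesis
  proof (rule prk_cong)
    fix xs :: "nat list"
    have sf: "((\<Sum>i<N xs. of_bool (P (i # xs)))::nat) = 0 \<longleftrightarrow> \<not> (\<exists>i<N xs. P (i # xs))"
      by (rule sum_of_bool_0)
    have gen: "\<And>s E. ((s::nat) = 0 \<longleftrightarrow> \<not> E) \<Longrightarrow> 1 - (1 - s) = of_bool E" by auto
    show "1 - (1 - (\<Sum>i<N xs. of_bool (P (i # xs)))) = (of_bool (\<exists>i<N xs. P (i # xs))::nat)"
      by (rule gen[OF sf])
  qed
qed

lemma prp_all: "prp (Suc k) P \<Longrightarrow> prk k N \<Longrightarrow> prp k (\<lambda>xs. \<forall>i<N xs. P (i # xs))"
proof -
  assume "prp (Suc k) P" "prk k N"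
  then have "prp k (\<lambda>xs. \<not> (\<exists>i<N xs. \<not> P (i # xs)))"
    by (intro prp_not prp_ex)
  then show ?thesis by (rule prk_cong) auto
qed

definition bmin :: "nat \<Rightarrow> (nat \<Rightarrow> bool) \<Rightarrow> nat" where
  "bmin n P = (if \<exists>i<n. P i then LEAST i. P i else n)"

lemma bmin_sum: "bmin n P = (\<Sum>j<n. of_bool (\<not> (\<exists>i<Suc j. P i)))"
proof (induction n)
  case 0
  then show ?case by (simp add: bmin_def)
next
  case (Suc n)
  show ?case
  proof (cases "\<exists>i<n. P i")
    case True
    then have "bmin (Suc n) P = bmin n P" by (auto simp: bmin_def)
    moreover have "\<exists>i<Suc n. P i" using True less_SucI by blast
    ultimately show ?thesis using Suc by simp
  next
    case False
    then have bn: "bmin n P = n" by (auto simp: bmin_def)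
    show ?thesis
    proof (cases "P n")
      case True
      then have "(LEAST i. P i) = n" using False
        by (metis (mono_tags, lifting) Least_equality not_le)
      then have "bmin (Suc n) P = n" using True by (auto simp: bmin_def intro: exI[of _ n])
      moreover have "\<exists>i<Suc n. P i" using True by blast
      ultimately show ?thesis using Suc bn by simp
    next
      case F2: False
      then have "\<not> (\<exists>i<Suc n. P i)" using False less_Suc_eq by auto
      then have "bmin (Suc n) P = Suc n" unfolding bmin_def by (rule if_not_P)
      then show ?thesis using Suc bn F2 False less_Suc_eq by auto
    qed
  qed
qed

lemma prk_bmin: "prp (Suc k) P \<Longrightarrow> prk k N \<Longrightarrow> prk k (\<lambda>xs. bmin (N xs) (\<lambda>i. P (i # xs)))"
proof -
  assume P: "prp (Suc k) P" and N: "prk k N"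
  have P2: "prp (Suc (Suc k)) (\<lambda>zs. P (zs ! 0 # drop 2 zs))"
    using prk_drop1[OF P] by simp
  have F1: "prp (Suc k) (\<lambda>ys. \<exists>i<Suc (ys ! 0). (\<lambda>zs. P (zs ! 0 # drop 2 zs)) (i # ys))"
    by (rule prp_ex[OF P2 prk_Suc[OF prk_id]]) simp
  have "prp (Suc k) (\<lambda>ys. \<exists>i<Suc (ys ! 0). P (i # tl ys))"
    by (rule prk_cong[OF F1]) (simp add: drop_Suc)
  then have "prp (Suc k) (\<lambda>ys. \<not> (\<exists>i<Suc (ys ! 0). P (i # tl ys)))"
    by (rule prp_not)
  then have "prk k (\<lambda>xs. \<Sum>j<N xs. of_bool (\<not> (\<exists>i<Suc ((j # xs) ! 0). P (i # tl (j # xs)))))"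
    by (intro prk_sum N)
  then show ?thesis by (rule prk_cong) (simp add: bmin_sum)
qed

lemma sum_div: "0 < b \<Longrightarrow> (\<Sum>q<n. of_bool (Suc q * b \<le> a)) = min n (a div b)"
proof (induction n)
  case 0
  then show ?case by simp
next
  case (Suc n)
  have "Suc n * b \<le> a \<longleftrightarrow> Suc n \<le> a div b" using Suc.prems
    by (simp add: less_eq_div_iff_mult_less_eq)
  then show ?case using Suc by auto
qed

lemma prk_div: "prk k f \<Longrightarrow> prk k g \<Longrightarrow> prk k (\<lambda>xs. f xs div g xs)"
proof -
  assume f: "prk k f" and g: "prk k g"
  have tf: "prk (Suc k) (\<lambda>ys. f (tl ys))" by (rule prk_tl[OF f])
  have tg: "prk (Suc k) (\<lambda>ys. g (tl ys))" by (rule prk_tl[OF g])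
  have Q: "prp (Suc k) (\<lambda>ys. Suc (ys ! 0) * g (tl ys) \<le> f (tl ys))"
    by (rule prp_le[OF prk_mult[OF prk_Suc[OF prk_id] tg] tf]) simp
  have S: "prk k (\<lambda>xs. \<Sum>q<f xs. (\<lambda>ys. of_bool (Suc (ys ! 0) * g (tl ys) \<le> f (tl ys))) (q # xs))"
    by (rule prk_sum[OF Q f])
  have "prk k (\<lambda>xs. of_bool (\<not> g xs = 0) * (\<Sum>q<f xs. (\<lambda>ys. of_bool (Suc (ys ! 0) * g (tl ys) \<le> f (tl ys))) (q # xs)))"
    by (rule prk_mult[OF prp_not[OF prp_eq[OF g prk_const]] S])
  then show ?thesis
  proof (rule prk_cong)
    fix xs :: "nat list"
    show "of_bool (\<not> g xs = 0) * (\<Sum>q<f xs. (\<lambda>ys. of_bool (Suc (ys ! 0) * g (tl ys) \<le> f (tl ys))) (q # xs)) = f xs div g xs"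
      by (cases "g xs = 0") (simp_all add: sum_div[simplified] min_def div_le_dividend antisym)
  qed
qed

lemma prp_odd: "prk k f \<Longrightarrow> prp k (\<lambda>xs. odd (f xs))"
proof -
  assume f: "prk k f"
  then have "prk k (\<lambda>xs. f xs - f xs div 2 * 2)" by (intro prk_sub prk_mult prk_div prk_const)
  then show ?thesis by (rule prk_cong) (simp add: minus_div_mult_eq_mod odd_iff_mod_2_eq_one)
qed

lemma triangle_mono: "a \<le> b \<Longrightarrow> triangle a \<le> triangle b"
  by (induction b) (auto simp: le_Suc_eq)

lemma triangle_ge: "a \<le> triangle a"
  by (induction a) auto

lemma sum_less_min: "(\<Sum>s<n. of_bool (s < m)) = min n (m::nat)"
  by (induction n) auto

lemma pd_formula:
  fixes n :: nat
  defines "K \<equiv> \<Sum>s<n. of_bool (triangle (Suc s) \<le> n)"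
  shows "prod_decode n = (n - triangle K, K - (n - triangle K))"
proof -
  obtain a b where ab: "prod_decode n = (a, b)" by (cases "prod_decode n")
  have "n = prod_encode (a, b)" using prod_decode_inverse[of n] ab by simp
  then have n: "n = triangle (a + b) + a" by (simp add: prod_encode_def)
  have iff: "triangle (Suc s) \<le> n \<longleftrightarrow> s < a + b" for s
  proof
    assume A: "triangle (Suc s) \<le> n"
    show "s < a + b"
    proof (rule ccontr)
      assume "\<not> s < a + b"
      then have "triangle (Suc (a + b)) \<le> triangle (Suc s)" by (intro triangle_mono) simp
      moreover have "triangle (Suc (a + b)) > n" using n by simp
      ultimately show False using A by linarith
    qed
  next
    assume "s < a + b"
    then have "triangle (Suc s) \<le> triangle (a + b)" by (intro triangle_mono) simp
    then show "triangle (Suc s) \<le> n" using n by linarith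
  qed
  have le: "a + b \<le> n" using n triangle_ge[of "a+b"] by linarith
  have "K = (\<Sum>s<n. of_bool (s < a + b))" unfolding K_def iff ..
  also have "\<dots> = a + b" using le by (simp add: sum_less_min min_def)
  finally have K: "K = a + b" .
  show ?thesis using ab n K by simp
qed

lemma prk_pdK: "prk k f \<Longrightarrow> prk k (\<lambda>xs. \<Sum>s<f xs. of_bool (triangle (Suc s) \<le> f xs))"
proof -
  assume f: "prk k f"
  have tf: "prk (Suc k) (\<lambda>ys. f (tl ys))" by (rule prk_tl[OF f])
  have Q: "prp (Suc k) (\<lambda>ys. triangle (Suc (ys ! 0)) \<le> f (tl ys))"
    by (rule prp_le[OF prk_triangle[OF prk_Suc[OF prk_id]] tf]) simp
  have "prk k (\<lambda>xs. \<Sum>s<f xs. (\<lambda>ys. of_bool (triangle (Suc (ys ! 0)) \<le> f (tl ys))) (s # xs))"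
    by (rule prk_sum[OF Q f])
  then show ?thesis by (rule prk_cong) simp
qed

lemma prk_fst_pd: "prk k f \<Longrightarrow> prk k (\<lambda>xs. fst (prod_decode (f xs)))"
proof -
  assume f: "prk k f"
  have "prk k (\<lambda>xs. f xs - triangle (\<Sum>s<f xs. of_bool (triangle (Suc s) \<le> f xs)))"
    by (rule prk_sub[OF f prk_triangle[OF prk_pdK[OF f]]])
  then show ?thesis by (rule prk_cong) (subst pd_formula, simp)
qed

lemma prk_snd_pd: "prk k f \<Longrightarrow> prk k (\<lambda>xs. snd (prod_decode (f xs)))"
proof -
  assume f: "prk k f"
  have "prk k (\<lambda>xs. (\<Sum>s<f xs. of_bool (triangle (Suc s) \<le> f xs)) - (f xs - triangle (\<Sum>s<f xs. of_bool (triangle (Suc s) \<le> f xs))))"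
    by (rule prk_sub[OF prk_pdK[OF f] prk_sub[OF f prk_triangle[OF prk_pdK[OF f]]]])
  then show ?thesis by (rule prk_cong) (subst pd_formula, simp)
qed

lemma prk_pe: "prk k f \<Longrightarrow> prk k g \<Longrightarrow> prk k (\<lambda>xs. prod_encode (f xs, g xs))"
proof -
  assume "prk k f" "prk k g"
  then have "prk k (\<lambda>xs. triangle (f xs + g xs) + f xs)" by (intro prk_add prk_triangle)
  then show ?thesis by (rule prk_cong) (simp add: prod_encode_def)
qed


lemma set_decode_mem: "x \<in> set_decode s \<longleftrightarrow> odd (s div 2 ^ x)"
  by (simp add: set_decode_def)

lemma prp_setmem: "prk k f \<Longrightarrow> prk k g \<Longrightarrow> prp k (\<lambda>xs. g xs \<in> set_decode (f xs))"
proof -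
  assume f: "prk k f" and g: "prk k g"
  have "prp k (\<lambda>xs. odd (f xs div 2 ^ g xs))" by (rule prp_odd[OF prk_div[OF f prk_pow2[OF g]]])
  then show ?thesis by (rule prk_cong) (simp add: set_decode_mem)
qed

lemma set_decode_less: "x \<in> set_decode s \<Longrightarrow> x < s"
proof -
  assume "x \<in> set_decode s"
  then have "odd (s div 2 ^ x)" by (simp add: set_decode_mem)
  then have "s div 2 ^ x \<noteq> 0" by (metis even_zero)
  then have "2 ^ x \<le> s" by (simp add: div_eq_0_iff) 
  moreover have "x < 2 ^ x" by simp
  ultimately show ?thesis by linarith
qed

lemma card_set_decode: "card (set_decode s) = (\<Sum>y<s. of_bool (y \<in> set_decode s))"
proof -
  have "(\<Sum>y<s. of_bool (y \<in> set_decode s)) = card ({..<s} \<inter> {y. y \<in> set_decode s})"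
    by (simp add: sum_of_bool_eq)
  also have "{..<s} \<inter> {y. y \<in> set_decode s} = set_decode s" using set_decode_less by auto
  finally show ?thesis by simp
qed

lemma prk_card_sd: "prk k f \<Longrightarrow> prk k (\<lambda>xs. card (set_decode (f xs)))"
proof -
  assume f: "prk k f"
  have Q: "prp (Suc k) (\<lambda>ys. ys ! 0 \<in> set_decode (f (tl ys)))"
    by (rule prp_setmem[OF prk_tl[OF f] prk_id]) simp
  have "prk k (\<lambda>xs. \<Sum>y<f xs. (\<lambda>ys. of_bool (ys ! 0 \<in> set_decode (f (tl ys)))) (y # xs))"
    by (rule prk_sum[OF Q f])
  then show ?thesis by (rule prk_cong) (simp add: card_set_decode)
qed

definition ltl :: "nat \<Rightarrow> nat" where
  "ltl c = (if c = 0 then 0 else snd (prod_decode (c - 1)))"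

definition lhd :: "nat \<Rightarrow> nat" where
  "lhd c = fst (prod_decode (c - 1))"

definition ldrop :: "nat \<Rightarrow> nat \<Rightarrow> nat" where
  "ldrop i c = (ltl ^^ i) c"

definition lnth :: "nat \<Rightarrow> nat \<Rightarrow> nat" where
  "lnth i c = lhd (ldrop i c)"

definition llen :: "nat \<Rightarrow> nat" where
  "llen c = (\<Sum>i<c. of_bool (ldrop i c \<noteq> 0))"

lemma ltl_enc: "ltl (list_encode l) = list_encode (tl l)"
  by (cases l) (auto simp: ltl_def)

lemma ldrop_enc: "ldrop i (list_encode l) = list_encode (drop i l)"
  unfolding ldrop_def
  by (induction i) (auto simp: ltl_enc drop_Suc tl_drop)

lemma lhd_enc: "l \<noteq> [] \<Longrightarrow> lhd (list_encode l) = hd l"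
  by (cases l) (auto simp: lhd_def)

lemma lnth_enc: "i < length l \<Longrightarrow> lnth i (list_encode l) = l ! i"
  by (simp add: lnth_def ldrop_enc lhd_enc hd_drop_conv_nth)

lemma length_le_enc: "length l \<le> list_encode l"
proof (induction l)
  case Nil
  then show ?case by simp
next
  case (Cons a l)
  then show ?case using le_prod_encode_2[of "list_encode l" a] by simp
qed

lemma mem_less_enc: "x \<in> set l \<Longrightarrow> x < list_encode l"
proof (induction l)
  case Nil
  then show ?case by simp
next
  case (Cons a l)
  then show ?case using le_prod_encode_2[of "list_encode l" a] le_prod_encode_1[of a "list_encode l"]
    by auto
qed

lemma list_encode_0: "list_encode l = 0 \<longleftrightarrow> l = []"
  by (cases l) auto

lemma llen_enc: "llen (list_encode l) = length l"
proof -
  have "ldrop i (list_encode l) \<noteq> 0 \<longleftrightarrow> i < length l" for i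
    by (auto simp: ldrop_enc list_encode_0)
  then have "llen (list_encode l) = (\<Sum>i<list_encode l. of_bool (i < length l))"
    by (simp add: llen_def)
  also have "\<dots> = length l" using length_le_enc[of l] by (simp add: sum_less_min min_def)
  finally show ?thesis .
qed

lemma prk_ltl: "prk k f \<Longrightarrow> prk k (\<lambda>xs. ltl (f xs))"
proof -
  assume f: "prk k f"
  have "prk k (\<lambda>xs. if f xs = 0 then 0 else snd (prod_decode (f xs - 1)))"
    by (rule prk_if[OF prp_eq[OF f prk_const] prk_const prk_snd_pd[OF prk_pred[OF f]]])
  then show ?thesis by (rule prk_cong) (simp add: ltl_def)
qed

lemma prk_lhd: "prk k f \<Longrightarrow> prk k (\<lambda>xs. lhd (f xs))"
proof -
  assume f: "prk k f"
  have "prk k (\<lambda>xs. fst (prod_decode (f xs - 1)))"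
    by (rule prk_fst_pd[OF prk_pred[OF f]])
  then show ?thesis by (rule prk_cong) (simp add: lhd_def)
qed

lemma prk_ldrop: "prk k f \<Longrightarrow> prk k g \<Longrightarrow> prk k (\<lambda>xs. ldrop (f xs) (g xs))"
proof -
  have "prk (Suc (Suc 0)) (\<lambda>xs. (\<lambda>n ys. (ltl ^^ n) (ys ! 0)) (hd xs) (tl xs))"
    by (rule prk_rec0[where G="\<lambda>zs. ltl (zs ! 1)" and F="\<lambda>ys. ys ! 0"]) (rule prk_id prk_ltl | simp)+
  then have b: "prk (Suc (Suc 0)) (\<lambda>xs. ldrop (xs ! 0) (xs ! 1))"
    by (rule prk_cong) (auto simp: length_Suc_conv ldrop_def)
  assume "prk k f" "prk k g"
  from lift2[OF b _ this] show ?thesis by simp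
qed

lemma prk_lnth: "prk k f \<Longrightarrow> prk k g \<Longrightarrow> prk k (\<lambda>xs. lnth (f xs) (g xs))"
  unfolding lnth_def by (rule prk_lhd[OF prk_ldrop])

lemma prk_llen: "prk k f \<Longrightarrow> prk k (\<lambda>xs. llen (f xs))"
proof -
  assume f: "prk k f"
  have Q: "prp (Suc k) (\<lambda>ys. ldrop (ys ! 0) (f (tl ys)) \<noteq> 0)"
    by (rule prp_not[OF prp_eq[OF prk_ldrop[OF prk_id prk_tl[OF f]] prk_const]]) simp
  have "prk k (\<lambda>xs. \<Sum>i<f xs. (\<lambda>ys. of_bool (ldrop (ys ! 0) (f (tl ys)) \<noteq> 0)) (i # xs))"
    by (rule prk_sum[OF Q f])
  then show ?thesis by (rule prk_cong) (simp add: llen_def)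
qed


definition takecode :: "nat \<Rightarrow> nat \<Rightarrow> nat" where
  "takecode k c = list_encode (take k (list_decode c))"

lemma lnth_dec: "i < length (list_decode c) \<Longrightarrow> lnth i c = list_decode c ! i"
  using lnth_enc[of i "list_decode c"] by simp

lemma llen_dec: "llen c = length (list_decode c)"
  using llen_enc[of "list_decode c"] by simp

lemma prk_takecode: "prk k f \<Longrightarrow> prk k g \<Longrightarrow> prk k (\<lambda>xs. takecode (f xs) (g xs))"
proof -
  define fr where "fr = (\<lambda>j ys. list_encode (drop (ys ! 0 - j) (take (ys ! 0) (list_decode (ys ! 1)))))"
  define G where "G = (\<lambda>zs. if Suc (zs ! 0) \<le> zs ! 2 \<and> zs ! 2 - Suc (zs ! 0) < llen (zs ! 3)
     then Suc (prod_encode (lnth (zs ! 2 - Suc (zs ! 0)) (zs ! 3), zs ! 1)) else zs ! 1)"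
  have G: "prk (Suc (Suc (Suc (Suc 0)))) G"
    unfolding G_def
    by (rule prk_if prp_and prp_le prk_Suc prk_id prp_less prk_sub prk_llen prk_pe prk_lnth | simp)+
  have fS: "fr (Suc j) ys = G (j # fr j ys # ys)" for j ys
  proof -
    let ?k = "ys ! 0" and ?l = "list_decode (ys ! 1)"
    show ?thesis
    proof (cases "Suc j \<le> ?k \<and> ?k - Suc j < llen (ys ! 1)")
      case True
      then have lt: "?k - Suc j < length (take ?k ?l)" by (simp add: llen_dec)
      have "drop (?k - Suc j) (take ?k ?l) = take ?k ?l ! (?k - Suc j) # drop (Suc (?k - Suc j)) (take ?k ?l)"
        by (rule Cons_nth_drop_Suc[OF lt, symmetric])
      moreover have "Suc (?k - Suc j) = ?k - j" using True Suc_diff_Suc[of j ?k] by simp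
      moreover have "take ?k ?l ! (?k - Suc j) = lnth (?k - Suc j) (ys ! 1)"
        using lt by (simp add: lnth_dec)
      ultimately show ?thesis using True by (simp add: fr_def G_def)
    next
      case False
      then have "drop (?k - Suc j) (take ?k ?l) = drop (?k - j) (take ?k ?l)"
        by (cases "Suc j \<le> ?k") (auto simp: llen_dec)
      then show ?thesis using False by (auto simp: fr_def G_def)
    qed
  qed
  have "prk (Suc (Suc 0)) (\<lambda>xs. fr (xs ! 0) xs)"
    by (rule prk_rec[OF prk_const G _ fS prk_id]) (simp_all add: fr_def)
  then have b: "prk (Suc (Suc 0)) (\<lambda>xs. takecode (xs ! 0) (xs ! 1))"
    by (rule prk_cong) (simp add: fr_def takecode_def)
  assume "prk k f" "prk k g"
  from lift2[OF b _ this] show ?thesis by simp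
qed

definition newp :: "nat \<Rightarrow> nat \<Rightarrow> bool" where
  "newp j c \<longleftrightarrow> lnth j c \<noteq> 0 \<and> (\<forall>i<j. lnth i c \<noteq> lnth j c)"

lemma prp_newp: "prk k f \<Longrightarrow> prk k g \<Longrightarrow> prp k (\<lambda>xs. newp (f xs) (g xs))"
proof -
  assume f: "prk k f" and g: "prk k g"
  have Q: "prp (Suc k) (\<lambda>ys. lnth (ys ! 0) (g (tl ys)) \<noteq> lnth (f (tl ys)) (g (tl ys)))"
    by (rule prp_not[OF prp_eq[OF prk_lnth[OF prk_id prk_tl[OF g]] prk_lnth[OF prk_tl[OF f] prk_tl[OF g]]]]) simp
  have "prp k (\<lambda>xs. lnth (f xs) (g xs) \<noteq> 0 \<and> (\<forall>i<f xs. (\<lambda>ys. lnth (ys ! 0) (g (tl ys)) \<noteq> lnth (f (tl ys)) (g (tl ys))) (i # xs)))"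
    by (rule prp_and[OF prp_not[OF prp_eq[OF prk_lnth[OF f g] prk_const]] prp_all[OF Q f]])
  then show ?thesis by (rule prk_cong) (simp add: newp_def)
qed

definition kstar :: "nat \<Rightarrow> nat" where
  "kstar c = bmin (Suc c) (\<lambda>k. \<forall>j<llen c. k \<le> j \<longrightarrow> \<not> newp j c)"

lemma prk_kstar: "prk k g \<Longrightarrow> prk k (\<lambda>xs. kstar (g xs))"
proof -
  assume g: "prk k g"
  have g2: "prk (Suc (Suc k)) (\<lambda>zs. g (tl (tl zs)))" by (rule prk_tl[OF prk_tl[OF g]])
  have g1: "prk (Suc k) (\<lambda>zs. g (tl zs))" by (rule prk_tl[OF g])
  have Q: "prp (Suc (Suc k)) (\<lambda>zs. zs ! 1 \<le> zs ! 0 \<longrightarrow> \<not> newp (zs ! 0) (g (tl (tl zs))))"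
    by (rule prp_imp[OF prp_le[OF prk_id prk_id] prp_not[OF prp_newp[OF prk_id g2]]]) simp_all
  have P: "prp (Suc k) (\<lambda>ys. \<forall>j<llen (g (tl ys)). (\<lambda>zs. zs ! 1 \<le> zs ! 0 \<longrightarrow> \<not> newp (zs ! 0) (g (tl (tl zs)))) (j # ys))"
    by (rule prp_all[OF Q prk_llen[OF g1]])
  have "prk k (\<lambda>xs. bmin (Suc (g xs)) (\<lambda>i. (\<lambda>ys. \<forall>j<llen (g (tl ys)). (\<lambda>zs. zs ! 1 \<le> zs ! 0 \<longrightarrow> \<not> newp (zs ! 0) (g (tl (tl zs)))) (j # ys)) (i # xs)))"
    by (rule prk_bmin[OF P prk_Suc[OF g]])
  then show ?thesis by (rule prk_cong) (simp add: kstar_def)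
qed

definition keyG :: "nat \<Rightarrow> nat" where
  "keyG c = takecode (kstar c) c"

lemma prk_keyG: "prk k g \<Longrightarrow> prk k (\<lambda>xs. keyG (g xs))"
  unfolding keyG_def by (rule prk_takecode[OF prk_kstar])

definition memG :: "nat \<Rightarrow> nat \<Rightarrow> bool" where
  "memG c x \<longleftrightarrow> (\<exists>i<llen c. lnth i c = Suc x)"

lemma prp_memG: "prk k f \<Longrightarrow> prk k g \<Longrightarrow> prp k (\<lambda>xs. memG (f xs) (g xs))"
proof -
  assume f: "prk k f" and g: "prk k g"
  have Q: "prp (Suc k) (\<lambda>ys. lnth (ys ! 0) (f (tl ys)) = Suc (g (tl ys)))"
    by (rule prp_eq[OF prk_lnth[OF prk_id prk_tl[OF f]] prk_Suc[OF prk_tl[OF g]]]) simp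
  have "prp k (\<lambda>xs. \<exists>i<llen (f xs). (\<lambda>ys. lnth (ys ! 0) (f (tl ys)) = Suc (g (tl ys))) (i # xs))"
    by (rule prp_ex[OF Q prk_llen[OF f]])
  then show ?thesis by (rule prk_cong) (simp add: memG_def)
qed


definition pv :: "recf \<Rightarrow> nat list \<Rightarrow> nat option" where
  "pv r xs = (if \<exists>y. eval r xs y then Some (THE y. eval r xs y) else None)"

lemma pv_eval: "pv r xs = Some y \<longleftrightarrow> eval r xs y"
proof
  assume "pv r xs = Some y"
  then have "\<exists>y. eval r xs y" and "y = (THE y. eval r xs y)" unfolding pv_def by (auto split: if_splits)
  then show "eval r xs y" using eval_det by (metis theI)
next
  assume "eval r xs y"
  then have "(THE y. eval r xs y) = y" using eval_det by blast
  then show "pv r xs = Some y" using \<open>eval r xs y\<close> unfolding pv_def by auto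
qed

lemma pv_None: "pv r xs = None \<longleftrightarrow> (\<forall>y. \<not> eval r xs y)"
  using pv_eval by (metis not_None_eq)

lemma pv_tot: "tot r k F \<Longrightarrow> length xs = k \<Longrightarrow> pv r xs = Some (F xs)"
  unfolding tot_def by (simp add: pv_eval)

lemma pv_Z: "pv Z xs = Some 0"
  by (simp add: pv_eval eval_Z)

lemma pv_Id: "i < length xs \<Longrightarrow> pv (Id i) xs = Some (xs ! i)"
  by (simp add: pv_eval eval_Id)

lemma pv_Cn: "pv (Cn f gs) xs =
  (if \<forall>i<length gs. pv (gs ! i) xs \<noteq> None then pv f (map (\<lambda>g. the (pv g xs)) gs) else None)"
proof (cases "\<forall>i<length gs. pv (gs ! i) xs \<noteq> None")
  case True
  let ?zs = "map (\<lambda>g. the (pv g xs)) gs"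
  have ev: "\<forall>i<length gs. eval (gs ! i) xs (?zs ! i)"
    using True pv_eval by fastforce
  have "eval (Cn f gs) xs y \<longleftrightarrow> eval f ?zs y" for y
  proof
    assume "eval (Cn f gs) xs y"
    then obtain zs where zs: "length zs = length gs" "\<forall>i<length gs. eval (gs ! i) xs (zs ! i)" "eval f zs y"
      by (rule evalCn_E) blast
    have "zs = ?zs" using zs(1,2) ev eval_det by (auto intro!: nth_equalityI)
    then show "eval f ?zs y" using zs(3) by simp
  next
    assume "eval f ?zs y"
    then show "eval (Cn f gs) xs y" using ev by (intro eval_Cn) auto
  qed
  then have "pv (Cn f gs) xs = pv f ?zs"
    by (metis option.exhaust pv_eval)
  then show ?thesis using True by simp
next
  case False
  then obtain i where i: "i < length gs" "pv (gs ! i) xs = None" by auto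
  have "\<not> eval (Cn f gs) xs y" for y
  proof
    assume "eval (Cn f gs) xs y"
    then obtain zs where zs: "length zs = length gs" "\<forall>i<length gs. eval (gs ! i) xs (zs ! i)"
      by (rule evalCn_E) blast
    then show False using i pv_None by blast
  qed
  then show ?thesis using False pv_None by auto
qed

lemma pv_eqI:
  assumes "\<And>y. eval r xs y \<longleftrightarrow> eval r' xs' y"
  shows "pv r xs = pv r' xs'"
proof -
  have "eval r xs = eval r' xs'" by (rule ext) (rule assms)
  then show ?thesis unfolding pv_def by simp
qed

lemma pv_NoneI: "(\<And>y. \<not> eval r xs y) \<Longrightarrow> pv r xs = None"
  unfolding pv_def by simp

lemma pv_Pr0: "pv (Pr f g) (0 # xs) = pv f xs"
proof (rule pv_eqI)
  fix y
  show "eval (Pr f g) (0 # xs) y \<longleftrightarrow> eval f xs y"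
  proof
    assume "eval (Pr f g) (0 # xs) y"
    then show "eval f xs y" by (rule evalPr_E) auto
  qed (rule eval_Pr0)
qed

lemma pv_PrS: "pv (Pr f g) (Suc n # xs) =
  (case pv (Pr f g) (n # xs) of None \<Rightarrow> None | Some z \<Rightarrow> pv g (n # z # xs))"
proof -
  have iff: "eval (Pr f g) (Suc n # xs) y \<longleftrightarrow> (\<exists>z. eval (Pr f g) (n # xs) z \<and> eval g (n # z # xs) y)" for y
  proof
    assume "eval (Pr f g) (Suc n # xs) y"
    then show "\<exists>z. eval (Pr f g) (n # xs) z \<and> eval g (n # z # xs) y"
      by (rule evalPr_E) auto
  qed (auto intro: eval_PrS)
  show ?thesis
  proof (cases "pv (Pr f g) (n # xs)")
    case None
    then have "\<And>z. \<not> eval (Pr f g) (n # xs) z" by (simp add: pv_None)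
    then have "pv (Pr f g) (Suc n # xs) = None" by (intro pv_NoneI) (simp add: iff)
    then show ?thesis using None by simp
  next
    case (Some z)
    then have z: "eval (Pr f g) (n # xs) z" by (simp add: pv_eval)
    have "pv (Pr f g) (Suc n # xs) = pv g (n # z # xs)"
    proof (rule pv_eqI)
      fix y
      show "eval (Pr f g) (Suc n # xs) y \<longleftrightarrow> eval g (n # z # xs) y"
        unfolding iff using z eval_det by blast
    qed
    then show ?thesis using Some by simp
  qed
qed

lemma pv_loop:
  assumes "\<And>y acc. y < m \<Longrightarrow> pv g (y # acc # rest) \<noteq> None \<longleftrightarrow> H y"
  shows "pv (Pr Z g) (m # rest) \<noteq> None \<longleftrightarrow> (\<forall>y<m. H y)"
  using assms
proof (induction m)
  case 0
  then show ?case by (simp add: pv_Pr0 pv_Z)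
next
  case (Suc m)
  have IH: "pv (Pr Z g) (m # rest) \<noteq> None \<longleftrightarrow> (\<forall>y<m. H y)" using Suc by simp
  show ?case
  proof (cases "pv (Pr Z g) (m # rest)")
    case None
    then show ?thesis using IH by (auto simp: pv_PrS intro: less_SucI)
  next
    case (Some z)
    then show ?thesis using IH Suc.prems[of m z] by (auto simp: pv_PrS less_Suc_eq)
  qed
qed


lemma all_less_Suc': "(\<forall>i<Suc n. P i) \<longleftrightarrow> P 0 \<and> (\<forall>i<n. P (Suc i))"
  using less_Suc_eq_0_disj by auto

lemma pv_Cn_tot: "length gs = length Fs \<Longrightarrow> (\<forall>i<length gs. pv (gs ! i) xs = Some (Fs ! i)) \<Longrightarrow>
  pv (Cn f gs) xs = pv f Fs"
proof -
  assume l: "length gs = length Fs" and a: "\<forall>i<length gs. pv (gs ! i) xs = Some (Fs ! i)"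
  have "map (\<lambda>g. the (pv g xs)) gs = Fs" using l a by (auto intro!: nth_equalityI)
  then show ?thesis using a by (simp add: pv_Cn)
qed

lemma opt_eqI: "(\<And>y. a = Some y \<longleftrightarrow> b = Some y) \<Longrightarrow> a = b"
  by (cases a; cases b) auto

lemma prk_tot: "prk k f \<Longrightarrow> \<exists>r. \<forall>xs. length xs = k \<longrightarrow> pv r xs = Some (f xs)"
  unfolding prk_def using pv_tot by blast

definition psiF :: "(nat \<Rightarrow> nat \<Rightarrow> nat option) \<Rightarrow> (nat \<Rightarrow> nat option) \<Rightarrow> (nat \<Rightarrow> nat) \<Rightarrow>
   (nat \<Rightarrow> nat \<Rightarrow> bool) \<Rightarrow> (nat \<Rightarrow> nat) \<Rightarrow> nat \<Rightarrow> nat \<Rightarrow> nat option" where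
  "psiF \<phi> h key mem bnd c x = (if mem c x \<or> (\<exists>e. h (key c) = Some e \<and>
       (\<forall>y<bnd c. mem c y \<longrightarrow> \<phi> e y \<noteq> None) \<and> \<phi> e x \<noteq> None) then Some 0 else None)"

lemma construct:
  fixes \<phi> :: "nat \<Rightarrow> nat \<Rightarrow> nat option" and h :: "nat \<Rightarrow> nat option"
    and key bnd :: "nat \<Rightarrow> nat" and mem :: "nat \<Rightarrow> nat \<Rightarrow> bool"
  assumes rU: "\<forall>n y. \<phi> (fst (prod_decode n)) (snd (prod_decode n)) = Some y \<longleftrightarrow> eval rU [n] y"
    and rh: "\<forall>x y. h x = Some y \<longleftrightarrow> eval rh [x] y"
    and key: "\<And>k f. prk k f \<Longrightarrow> prk k (\<lambda>xs. key (f xs))"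
    and mem: "\<And>k f g. prk k f \<Longrightarrow> prk k g \<Longrightarrow> prp k (\<lambda>xs. mem (f xs) (g xs))"
    and bnd: "\<And>k f. prk k f \<Longrightarrow> prk k (\<lambda>xs. bnd (f xs))"
  shows "computable_numbering (psiF \<phi> h key mem bnd)"
proof -
  have pU: "pv rU [m] = \<phi> (fst (prod_decode m)) (snd (prod_decode m))" for m
    by (rule opt_eqI) (simp add: pv_eval rU)
  have pH: "pv rh [m] = h m" for m
    by (rule opt_eqI) (simp add: pv_eval rh)
  obtain rPE6 where rPE6: "\<And>ws. length ws = 6 \<Longrightarrow> pv rPE6 ws = Some (prod_encode (ws ! 4, ws ! 2))"
    using prk_tot[OF prk_pe[OF prk_id prk_id, of 4 6 2]] by auto
  obtain rM4 where rM4: "\<And>zs. length zs = 4 \<Longrightarrow> pv rM4 zs = Some (of_bool (mem (fst (prod_decode (zs ! 3))) (zs ! 0)))"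
    using prk_tot[OF mem[OF prk_fst_pd[OF prk_id] prk_id], of 3 4 0] by auto
  define gU where "gU = Cn rU [rPE6]"
  define stepB where "stepB = Pr Z gU"
  define step where "step = Cn stepB [rM4, Id 0, Id 1, Id 2, Id 3]"
  have pstep: "pv step zs \<noteq> None \<longleftrightarrow> (mem (fst (prod_decode (zs ! 3))) (zs ! 0) \<longrightarrow> \<phi> (zs ! 2) (zs ! 0) \<noteq> None)"
    if "length zs = 4" for zs
  proof -
    let ?b = "of_bool (mem (fst (prod_decode (zs ! 3))) (zs ! 0)) :: nat"
    have "pv step zs = pv stepB (?b # zs)"
      unfolding step_def
    proof (rule pv_Cn_tot)
      show "length [rM4, Id 0, Id 1, Id 2, Id 3] = length (?b # zs)" using that by simp
      show "\<forall>i<length [rM4, Id 0, Id 1, Id 2, Id 3]. pv ([rM4, Id 0, Id 1, Id 2, Id 3] ! i) zs = Some ((?b # zs) ! i)"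
        using that by (simp add: all_less_Suc' rM4 pv_Id numeral_eq_Suc)
    qed
    moreover have "pv gU (0 # 0 # zs) = \<phi> (zs ! 2) (zs ! 0)"
    proof -
      have "pv gU (0 # 0 # zs) = pv rU [prod_encode (zs ! 2, zs ! 0)]"
        unfolding gU_def by (rule pv_Cn_tot) (use that in \<open>simp_all add: rPE6\<close>)
      then show ?thesis by (simp add: pU)
    qed
    ultimately show ?thesis
      by (cases "mem (fst (prod_decode (zs ! 3))) (zs ! 0)")
        (simp_all add: stepB_def pv_Pr0 pv_Z pv_PrS)
  qed
  obtain rB2 where rB2: "\<And>ws. length ws = 2 \<Longrightarrow> pv rB2 ws = Some (bnd (fst (prod_decode (ws ! 1))))"
    using prk_tot[OF bnd[OF prk_fst_pd[OF prk_id]], of 1 2] by auto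
  obtain rPE2 where rPE2: "\<And>ws. length ws = 2 \<Longrightarrow> pv rPE2 ws = Some (prod_encode (ws ! 0, snd (prod_decode (ws ! 1))))"
    using prk_tot[OF prk_pe[OF prk_id prk_snd_pd[OF prk_id]], of 0 2 1] by auto
  define loop where "loop = Cn (Pr Z step) [rB2, Id 0, Id 1]"
  define fin where "fin = Cn rU [rPE2]"
  define body where "body = Cn Z [loop, fin]"
  have ploop: "pv loop [e, n] \<noteq> None \<longleftrightarrow>
     (\<forall>y<bnd (fst (prod_decode n)). mem (fst (prod_decode n)) y \<longrightarrow> \<phi> e y \<noteq> None)" for e n
  proof -
    have "pv loop [e, n] = pv (Pr Z step) (bnd (fst (prod_decode n)) # [e, n])"
      unfolding loop_def by (rule pv_Cn_tot) (simp_all add: all_less_Suc' rB2 pv_Id)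
    moreover have "pv (Pr Z step) (bnd (fst (prod_decode n)) # [e, n]) \<noteq> None \<longleftrightarrow>
     (\<forall>y<bnd (fst (prod_decode n)). mem (fst (prod_decode n)) y \<longrightarrow> \<phi> e y \<noteq> None)"
      by (rule pv_loop) (subst pstep, simp_all)
    ultimately show ?thesis by simp
  qed
  have pfin: "pv fin [e, n] = \<phi> e (snd (prod_decode n))" for e n
  proof -
    have "pv fin [e, n] = pv rU [prod_encode (e, snd (prod_decode n))]"
      unfolding fin_def by (rule pv_Cn_tot) (simp_all add: rPE2)
    then show ?thesis by (simp add: pU)
  qed
  have pbody: "pv body [e, n] \<noteq> None \<longleftrightarrow> pv loop [e, n] \<noteq> None \<and> pv fin [e, n] \<noteq> None" for e n
    unfolding body_def by (simp add: pv_Cn all_less_Suc' pv_Z)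
  obtain rK3 where rK3: "\<And>ws. length ws = 3 \<Longrightarrow> pv rK3 ws = Some (key (fst (prod_decode (ws ! 2))))"
    using prk_tot[OF key[OF prk_fst_pd[OF prk_id]], of 2 3] by auto
  define hk where "hk = Cn rh [rK3]"
  define gC where "gC = Cn body [hk, Id 2]"
  have phk: "pv hk ws = h (key (fst (prod_decode (ws ! 2))))" if "length ws = 3" for ws
  proof -
    have "pv hk ws = pv rh [key (fst (prod_decode (ws ! 2)))]"
      unfolding hk_def by (rule pv_Cn_tot) (use that in \<open>simp_all add: rK3\<close>)
    then show ?thesis by (simp add: pH)
  qed
  have pgC: "pv gC [a, acc, n] \<noteq> None \<longleftrightarrow>
     (\<exists>e. h (key (fst (prod_decode n))) = Some e \<and> pv body [e, n] \<noteq> None)" for a acc n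
  proof (cases "h (key (fst (prod_decode n)))")
    case None
    then show ?thesis unfolding gC_def by (simp add: pv_Cn all_less_Suc' phk)
  next
    case (Some e)
    then show ?thesis unfolding gC_def by (simp add: pv_Cn all_less_Suc' phk pv_Id)
  qed
  obtain rNM1 where rNM1: "\<And>ws. length ws = 1 \<Longrightarrow> pv rNM1 ws =
      Some (of_bool (\<not> mem (fst (prod_decode (ws ! 0))) (snd (prod_decode (ws ! 0)))))"
    using prk_tot[OF prp_not[OF mem[OF prk_fst_pd[OF prk_id] prk_snd_pd[OF prk_id]]], of 0 1 0] by auto
  define condC where "condC = Cn (Pr Z gC) [rNM1, Id 0]"
  define R where "R = Cn Z [condC]"
  have pR: "pv R [n] = psiF \<phi> h key mem bnd (fst (prod_decode n)) (snd (prod_decode n))" for n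
  proof -
    let ?c = "fst (prod_decode n)" and ?x = "snd (prod_decode n)"
    let ?b = "of_bool (\<not> mem ?c ?x) :: nat"
    have "pv condC [n] = pv (Pr Z gC) [?b, n]"
      unfolding condC_def by (rule pv_Cn_tot) (simp_all add: all_less_Suc' rNM1 pv_Id)
    then have "pv condC [n] \<noteq> None \<longleftrightarrow> mem ?c ?x \<or> pv gC [0, 0, n] \<noteq> None"
      by (cases "mem ?c ?x") (simp_all add: pv_Pr0 pv_PrS pv_Z)
    also have "\<dots> \<longleftrightarrow> mem ?c ?x \<or> (\<exists>e. h (key ?c) = Some e \<and>
       (\<forall>y<bnd ?c. mem ?c y \<longrightarrow> \<phi> e y \<noteq> None) \<and> \<phi> e ?x \<noteq> None)"
      unfolding pgC pbody ploop pfin by (rule refl)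
    finally have cC: "pv condC [n] \<noteq> None \<longleftrightarrow> mem ?c ?x \<or> (\<exists>e. h (key ?c) = Some e \<and>
       (\<forall>y<bnd ?c. mem ?c y \<longrightarrow> \<phi> e y \<noteq> None) \<and> \<phi> e ?x \<noteq> None)" .
    have "pv R [n] = (if pv condC [n] \<noteq> None then Some 0 else None)"
      unfolding R_def by (simp add: pv_Cn pv_Z)
    then show ?thesis using cC unfolding psiF_def by simp
  qed
  show ?thesis
    unfolding computable_numbering_def computable_def
    by (rule exI[of _ R]) (simp add: pR[symmetric] pv_eval)
qed


lemma ci_mono: "i \<le> j \<Longrightarrow> content_init T i \<subseteq> content_init T j"
  unfolding content_init_def using less_le_trans by blast

lemma ci_finite: "finite (content_init T i)"
proof -
  have "content_init T i \<subseteq> (\<lambda>k. the (T k)) ` {..<i}"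
    unfolding content_init_def by force
  then show ?thesis by (rule finite_subset) simp
qed

lemma ci_0: "content_init T 0 = {}"
  unfolding content_init_def by auto

lemma ci_Suc: "content_init T (Suc i) = content_init T i \<union> {x. T i = Some x}"
  unfolding content_init_def by (auto simp: less_Suc_eq)

lemma ci_sub: "content_init T i \<subseteq> content T"
  unfolding content_init_def content_def by auto

lemma content_ci: "x \<in> content T \<Longrightarrow> \<exists>i. x \<in> content_init T i"
  unfolding content_init_def content_def by auto

lemma fin_sub_ci: "finite B \<Longrightarrow> B \<subseteq> content T \<Longrightarrow> \<exists>m. B \<subseteq> content_init T m"
proof (induction rule: finite_induct)
  case empty
  then show ?case by auto
next
  case (insert x B)
  then obtain m where m: "B \<subseteq> content_init T m" by auto
  obtain i where i: "x \<in> content_init T i" using insert content_ci by blast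
  have "insert x B \<subseteq> content_init T (max m i)"
    using m i ci_mono[of m "max m i" T] ci_mono[of i "max m i" T] by auto
  then show ?case by blast
qed

lemma card_ci_Suc: "card (content_init T (Suc i)) \<le> Suc (card (content_init T i))"
proof (cases "T i")
  case None
  then show ?thesis by (simp add: ci_Suc)
next
  case (Some x)
  then have "content_init T (Suc i) = insert x (content_init T i)" by (auto simp: ci_Suc)
  then show ?thesis using ci_finite by (simp add: card_insert_if)
qed

lemma card_ci_le: "card (content_init T i) \<le> i"
proof (induction i)
  case 0
  then show ?case by (simp add: ci_0)
next
  case (Suc i)
  then show ?case using card_ci_Suc[of T i] by simp
qed

lemma ci_unbounded: "infinite (content T) \<Longrightarrow> \<exists>m. K \<le> card (content_init T m)"
proof -
  assume "infinite (content T)"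
  then obtain B where B: "finite B" "card B = K" "B \<subseteq> content T"
    using infinite_arbitrarily_large by blast
  then obtain m where "B \<subseteq> content_init T m" using fin_sub_ci by blast
  then have "card B \<le> card (content_init T m)" using ci_finite by (rule card_mono[rotated])
  then show ?thesis using B by auto
qed

lemma ci_finite_eventually: "finite (content T) \<Longrightarrow> \<exists>M. \<forall>m\<ge>M. content_init T m = content T"
proof -
  assume "finite (content T)"
  then obtain M where "content T \<subseteq> content_init T M" using fin_sub_ci by blast
  then have "\<forall>m\<ge>M. content_init T m = content T"
    using ci_mono[of M _ T] ci_sub[of T] by blast
  then show ?thesis by blast
qed

definition ltxt :: "nat list \<Rightarrow> txtT" where
  "ltxt xs i = (if i < length xs then Some (xs ! i) else None)"

lemma ci_ltxt: "content_init (ltxt xs) k = set (take k xs)"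
  unfolding content_init_def ltxt_def by (force simp: in_set_conv_nth)

lemma content_ltxt: "content (ltxt xs) = set xs"
  unfolding content_def ltxt_def by (force simp: in_set_conv_nth)

lemma ci_ltxt_sorted: "finite A \<Longrightarrow> card A \<le> k \<Longrightarrow> content_init (ltxt (sorted_list_of_set A)) k = A"
  by (simp add: ci_ltxt)

lemma ci_ltxt_two:
  assumes "finite A" "finite B" "A \<subseteq> B"
  defines "xs \<equiv> sorted_list_of_set A @ sorted_list_of_set (B - A)"
  shows "content_init (ltxt xs) (card A) = A" "content_init (ltxt xs) (card B) = B"
proof -
  show "content_init (ltxt xs) (card A) = A" unfolding xs_def ci_ltxt using assms by simp
  have "card B = card A + card (B - A)" using assms
    by (metis card_Diff_subset card_mono le_add_diff_inverse)
  then have "take (card B) xs = xs" unfolding xs_def using assms by simp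
  then show "content_init (ltxt xs) (card B) = B" unfolding ci_ltxt xs_def using assms by auto
qed

lemma SemWb_imp_SemConv: "SemWb \<phi> p T \<Longrightarrow> SemConv \<phi> p T"
  unfolding SemWb_def SemConv_def
proof (intro allI impI)
  fix n m assume A: "\<forall>n m. (\<exists>k\<ge>n. k \<le> m \<and> W \<phi> (p n) \<noteq> W \<phi> (p k)) \<longrightarrow>
      content_init T m \<inter> W \<phi> (p m) - W \<phi> (p n) \<noteq> {}"
    and B: "n < m \<and> content_init T m \<subseteq> W \<phi> (p n)"
  show "W \<phi> (p n) = W \<phi> (p m)"
  proof (rule ccontr)
    assume "W \<phi> (p n) \<noteq> W \<phi> (p m)"
    then have "content_init T m \<inter> W \<phi> (p m) - W \<phi> (p n) \<noteq> {}" using A B less_imp_le by blast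
    then show False using B by auto
  qed
qed

lemma SemConv_imp_SemWb:
  assumes sc: "SemConv \<phi> p T" and sup: "\<And>m. content_init T m \<subseteq> W \<phi> (p m)"
  shows "SemWb \<phi> p T"
  unfolding SemWb_def
proof (intro allI impI)
  fix n m assume "\<exists>k\<ge>n. k \<le> m \<and> W \<phi> (p n) \<noteq> W \<phi> (p k)"
  then obtain k where k: "n \<le> k" "k \<le> m" "W \<phi> (p n) \<noteq> W \<phi> (p k)" by blast
  then have nk: "n < k" by (cases "n = k") auto
  have "\<not> content_init T m \<subseteq> W \<phi> (p n)"
  proof
    assume "content_init T m \<subseteq> W \<phi> (p n)"
    then have "content_init T k \<subseteq> W \<phi> (p n)" using ci_mono[OF k(2)] by blast
    then show False using sc nk k(3) unfolding SemConv_def by blast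
  qed
  then show "content_init T m \<inter> W \<phi> (p m) - W \<phi> (p n) \<noteq> {}" using sup[of m] by blast
qed


lemma dom_psiF:
  assumes "h (key c) = Some e" "{y. mem c y} = C" "\<forall>y\<in>C. y < bnd c"
  shows "dom (psiF \<phi> h key mem bnd c) = C \<union> (if C \<subseteq> W \<phi> e then W \<phi> e else {})"
  using assms unfolding psiF_def W_def by (auto simp: dom_def)

lemma get_t:
  fixes \<phi> :: "nat \<Rightarrow> nat \<Rightarrow> nat option" and h :: "nat \<Rightarrow> nat option"
    and key bnd :: "nat \<Rightarrow> nat" and mem :: "nat \<Rightarrow> nat \<Rightarrow> bool"
  assumes acc: "acceptable \<phi>" and hc: "computable h"
    and key: "\<And>k f. prk k f \<Longrightarrow> prk k (\<lambda>xs. key (f xs))"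
    and mem: "\<And>k f g. prk k f \<Longrightarrow> prk k g \<Longrightarrow> prp k (\<lambda>xs. mem (f xs) (g xs))"
    and bnd: "\<And>k f. prk k f \<Longrightarrow> prk k (\<lambda>xs. bnd (f xs))"
  shows "\<exists>t. computable (\<lambda>x. Some (t x)) \<and> (\<forall>c. W \<phi> (t c) = dom (psiF \<phi> h key mem bnd c))"
proof -
  from acc obtain rU where rU: "\<forall>n y. \<phi> (fst (prod_decode n)) (snd (prod_decode n)) = Some y \<longleftrightarrow> eval rU [n] y"
    unfolding acceptable_def computable_numbering_def computable_def by blast
  from hc obtain rh where rh: "\<forall>x y. h x = Some y \<longleftrightarrow> eval rh [x] y"
    unfolding computable_def by blast
  have "computable_numbering (psiF \<phi> h key mem bnd)"
    by (rule construct[OF rU rh key mem bnd])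
  then obtain t where t: "computable (\<lambda>x. Some (t x))" "\<forall>e. psiF \<phi> h key mem bnd e = \<phi> (t e)"
    using acc unfolding acceptable_def by blast
  then show ?thesis unfolding W_def by auto
qed

lemma sc_transfer:
  fixes C Y :: "nat \<Rightarrow> nat set"
  assumes mono: "\<And>n m. n \<le> m \<Longrightarrow> C n \<subseteq> C m"
    and sameY: "\<And>n m. C n = C m \<Longrightarrow> Y n = Y m"
    and adv: "\<And>n m. n < m \<Longrightarrow> C m \<subseteq> Y n \<Longrightarrow> C n \<subseteq> Y n \<Longrightarrow> Y m = Y n"
  defines "Q \<equiv> \<lambda>i. C i \<union> (if C i \<subseteq> Y i then Y i else {})"
  shows "n < m \<Longrightarrow> C m \<subseteq> Q n \<Longrightarrow> Q n = Q m"
proof -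
  assume nm: "n < m" and sub: "C m \<subseteq> Q n"
  show "Q n = Q m"
  proof (cases "C n \<subseteq> Y n")
    case True
    then have Qn: "Q n = Y n" unfolding Q_def by auto
    then have "Y m = Y n" using adv[OF nm] sub True by auto
    moreover have "C m \<subseteq> Y m" using sub Qn \<open>Y m = Y n\<close> by auto
    ultimately show ?thesis using Qn unfolding Q_def by auto
  next
    case False
    then have "Q n = C n" unfolding Q_def by auto
    then have "C n = C m" using sub mono[of n m] nm by auto
    then show ?thesis using sameY[of n m] unfolding Q_def by simp
  qed
qed

lemma Sd_case:
  fixes \<phi> :: "nat \<Rightarrow> nat \<Rightarrow> nat option" and h :: "nat \<Rightarrow> nat option"
  assumes acc: "acceptable \<phi>" and hc: "computable h"
    and tot: "\<forall>T i. Sd_op h T i \<noteq> None"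
    and sc: "\<forall>T. SemConv \<phi> (\<lambda>i. the (Sd_op h T i)) T"
  shows "\<exists>h'. computable h' \<and> (\<forall>T i. Sd_op h' T i \<noteq> None) \<and> (\<forall>T. SemWb \<phi> (\<lambda>i. the (Sd_op h' T i)) T) \<and>
     (\<forall>L. (\<forall>T. content T = L \<longrightarrow> Bc \<phi> (\<lambda>i. the (Sd_op h T i)) T) \<longrightarrow>
          (\<forall>T. content T = L \<longrightarrow> Bc \<phi> (\<lambda>i. the (Sd_op h' T i)) T))"
proof -
  let ?mem = "\<lambda>c x. x \<in> set_decode c"
  obtain t where t: "computable (\<lambda>x. Some (t x))" "\<forall>c. W \<phi> (t c) = dom (psiF \<phi> h (\<lambda>c. c) ?mem (\<lambda>c. c) c)"
    using get_t[OF acc hc, of "\<lambda>c. c" ?mem "\<lambda>c. c"] prp_setmem by blast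
  define h' where "h' = (\<lambda>x. Some (t x))"
  have Wq: "W \<phi> (the (Sd_op h' T i)) = content_init T i \<union>
     (if content_init T i \<subseteq> W \<phi> (the (Sd_op h T i)) then W \<phi> (the (Sd_op h T i)) else {})" for T i
  proof -
    let ?C = "content_init T i"
    have "h (set_encode ?C) = Some (the (Sd_op h T i))" using tot unfolding Sd_op_def by auto
    moreover have "{y. ?mem (set_encode ?C) y} = ?C" using ci_finite by simp
    moreover have "\<forall>y\<in>?C. y < set_encode ?C" using ci_finite set_decode_less
      by (metis set_encode_inverse)
    ultimately have "dom (psiF \<phi> h (\<lambda>c. c) ?mem (\<lambda>c. c) (set_encode ?C)) = ?C \<union>
       (if ?C \<subseteq> W \<phi> (the (Sd_op h T i)) then W \<phi> (the (Sd_op h T i)) else {})"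
      by (rule dom_psiF)
    then show ?thesis using t(2) unfolding h'_def Sd_op_def by simp
  qed
  have semconv: "SemConv \<phi> (\<lambda>i. the (Sd_op h' T i)) T" for T
    unfolding SemConv_def Wq
  proof (intro allI impI)
    fix n m assume nm: "n < m \<and> content_init T m \<subseteq> content_init T n \<union>
       (if content_init T n \<subseteq> W \<phi> (the (Sd_op h T n)) then W \<phi> (the (Sd_op h T n)) else {})"
    show "content_init T n \<union> (if content_init T n \<subseteq> W \<phi> (the (Sd_op h T n)) then W \<phi> (the (Sd_op h T n)) else {}) =
      content_init T m \<union> (if content_init T m \<subseteq> W \<phi> (the (Sd_op h T m)) then W \<phi> (the (Sd_op h T m)) else {})"
    proof (rule sc_transfer[where C="content_init T" and Y="\<lambda>i. W \<phi> (the (Sd_op h T i))"])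
      show "\<And>n m. n \<le> m \<Longrightarrow> content_init T n \<subseteq> content_init T m" by (rule ci_mono)
      show "\<And>n m. content_init T n = content_init T m \<Longrightarrow> W \<phi> (the (Sd_op h T n)) = W \<phi> (the (Sd_op h T m))"
        by (simp add: Sd_op_def)
      show "\<And>n m. n < m \<Longrightarrow> content_init T m \<subseteq> W \<phi> (the (Sd_op h T n)) \<Longrightarrow> content_init T n \<subseteq> W \<phi> (the (Sd_op h T n)) \<Longrightarrow>
          W \<phi> (the (Sd_op h T m)) = W \<phi> (the (Sd_op h T n))"
        using sc unfolding SemConv_def by metis
    qed (use nm in auto)
  qed
  have "SemWb \<phi> (\<lambda>i. the (Sd_op h' T i)) T" for T
    by (rule SemConv_imp_SemWb[OF semconv]) (simp add: Wq)
  moreover have "Bc \<phi> (\<lambda>i. the (Sd_op h' T i)) T" if "Bc \<phi> (\<lambda>i. the (Sd_op h T i)) T" for T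
  proof -
    from that obtain n0 where n0: "\<forall>n\<ge>n0. W \<phi> (the (Sd_op h T n)) = content T" unfolding Bc_def by blast
    have "\<forall>n\<ge>n0. W \<phi> (the (Sd_op h' T n)) = content T"
      using n0 ci_sub[of T] unfolding Wq by auto
    then show ?thesis unfolding Bc_def by blast
  qed
  moreover have "computable h'" using t(1) unfolding h'_def .
  moreover have "\<forall>T i. Sd_op h' T i \<noteq> None" unfolding h'_def Sd_op_def by simp
  ultimately show ?thesis by blast
qed


lemma compress:
  assumes inf: "infinite (content T)"
  shows "\<exists>T'. content T' = content T \<and> (\<forall>m. content_init T' (card (content_init T m)) = content_init T m)"
proof -
  define f where "f q = (LEAST m. q < card (content_init T m))" for q
  define T' where "T' q = T (f q - 1)" for q
  have ex: "\<exists>m. q < card (content_init T m)" for q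
    using ci_unbounded[OF inf, of "Suc q"] Suc_le_eq by blast
  have main: "card (content_init T m) = q \<Longrightarrow> content_init T' q = content_init T m" for q m
  proof (induction q arbitrary: m)
    case 0
    then have "content_init T m = {}" using ci_finite by auto
    then show ?case by (simp add: ci_0)
  next
    case (Suc q)
    let ?m = "f q"
    have lt: "q < card (content_init T ?m)" unfolding f_def by (rule LeastI_ex[OF ex])
    have le: "?m \<le> m" unfolding f_def using Suc.prems by (intro Least_le) simp
    have pos: "0 < ?m" using lt by (cases "?m") (auto simp: ci_0)
    have "\<not> q < card (content_init T (?m - 1))"
      unfolding f_def by (rule not_less_Least) (use pos in \<open>simp add: f_def\<close>)
    moreover have "card (content_init T ?m) \<le> Suc (card (content_init T (?m - 1)))"
      using card_ci_Suc[of T "?m - 1"] pos by simp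
    ultimately have c1: "card (content_init T (?m - 1)) = q" and c2: "card (content_init T ?m) = Suc q"
      using lt by auto
    have "content_init T ?m = content_init T m"
      using ci_mono[OF le] c2 Suc.prems ci_finite by (metis card_subset_eq)
    moreover have "content_init T' q = content_init T (?m - 1)" using Suc.IH c1 by simp
    moreover have "content_init T (Suc (?m - 1)) = content_init T ?m" using pos by simp
    ultimately show ?case unfolding ci_Suc T'_def by (metis ci_Suc)
  qed
  have "content T' = content T"
  proof
    show "content T' \<subseteq> content T" unfolding content_def T'_def by auto
    show "content T \<subseteq> content T'"
    proof
      fix x assume "x \<in> content T"
      then obtain m where "x \<in> content_init T m" using content_ci by blast
      then have "x \<in> content_init T' (card (content_init T m))" using main by simp
      then show "x \<in> content T'" using ci_sub by blast
    qed
  qed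
  then show ?thesis using main by blast
qed

lemma card_ci_mono: "m \<le> m' \<Longrightarrow> card (content_init T m) \<le> card (content_init T m')"
  by (rule card_mono[OF ci_finite ci_mono])

definition keyP :: "nat \<Rightarrow> nat" where
  "keyP c = prod_encode (fst (prod_decode c), card (set_decode (fst (prod_decode c))))"

lemma Psd_case:
  fixes \<phi> :: "nat \<Rightarrow> nat \<Rightarrow> nat option" and h :: "nat \<Rightarrow> nat option"
  assumes acc: "acceptable \<phi>" and hc: "computable h"
    and tot: "\<forall>T i. Psd_op h T i \<noteq> None"
    and sc: "\<forall>T. SemConv \<phi> (\<lambda>i. the (Psd_op h T i)) T"
  shows "\<exists>h'. computable h' \<and> (\<forall>T i. Psd_op h' T i \<noteq> None) \<and> (\<forall>T. SemWb \<phi> (\<lambda>i. the (Psd_op h' T i)) T) \<and>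
     (\<forall>L. (\<forall>T. content T = L \<longrightarrow> Bc \<phi> (\<lambda>i. the (Psd_op h T i)) T) \<longrightarrow>
          (\<forall>T. content T = L \<longrightarrow> Bc \<phi> (\<lambda>i. the (Psd_op h' T i)) T))"
proof -
  let ?mem = "\<lambda>c x. x \<in> set_decode (fst (prod_decode c))"
  let ?bnd = "\<lambda>c. fst (prod_decode c)"
  have key: "prk k (\<lambda>xs. keyP (f xs))" if "prk k f" for k f
    unfolding keyP_def by (rule prk_pe[OF prk_fst_pd[OF that] prk_card_sd[OF prk_fst_pd[OF that]]])
  have mem: "prp k (\<lambda>xs. ?mem (f xs) (g xs))" if "prk k f" "prk k g" for k f g
    by (rule prp_setmem[OF prk_fst_pd[OF that(1)] that(2)])
  obtain t where t: "computable (\<lambda>x. Some (t x))" "\<forall>c. W \<phi> (t c) = dom (psiF \<phi> h keyP ?mem ?bnd c)"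
    using get_t[OF acc hc, of keyP ?mem ?bnd, OF key mem prk_fst_pd] by blast
  define h' where "h' = (\<lambda>x. Some (t x))"
  define YP where "YP C = W \<phi> (the (h (prod_encode (set_encode C, card C))))" for C
  have hdef: "h (prod_encode (set_encode C, card C)) \<noteq> None" if "finite C" for C
  proof -
    have "Psd_op h (ltxt (sorted_list_of_set C)) (card C) \<noteq> None" using tot by blast
    then show ?thesis unfolding Psd_op_def using ci_ltxt_sorted[OF that, of "card C"] by simp
  qed
  have Wq: "W \<phi> (the (Psd_op h' T i)) = content_init T i \<union>
     (if content_init T i \<subseteq> YP (content_init T i) then YP (content_init T i) else {})" for T i
  proof -
    let ?C = "content_init T i"
    let ?c = "prod_encode (set_encode ?C, i)"
    have "h (keyP ?c) = Some (the (h (prod_encode (set_encode ?C, card ?C))))"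
      using hdef[OF ci_finite] unfolding keyP_def using ci_finite by simp
    moreover have "{y. ?mem ?c y} = ?C" using ci_finite by simp
    moreover have "\<forall>y\<in>?C. y < ?bnd ?c" using ci_finite set_decode_less
      by (metis fst_conv prod_encode_inverse set_encode_inverse)
    ultimately have "dom (psiF \<phi> h keyP ?mem ?bnd ?c) = ?C \<union> (if ?C \<subseteq> YP ?C then YP ?C else {})"
      unfolding YP_def by (rule dom_psiF)
    then show ?thesis using t(2) unfolding h'_def Psd_op_def by simp
  qed
  have adv: "YP B = YP A" if "finite A" "finite B" "A \<subseteq> B" "B \<subseteq> YP A" for A B
  proof (cases "A = B")
    case True
    then show ?thesis by simp
  next
    case False
    define xs where "xs = sorted_list_of_set A @ sorted_list_of_set (B - A)"
    have cA: "content_init (ltxt xs) (card A) = A" and cB: "content_init (ltxt xs) (card B) = B"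
      using ci_ltxt_two[OF that(1-3)] unfolding xs_def by auto
    have lt: "card A < card B" using False that by (simp add: psubset_card_mono)
    have s: "\<forall>n m. n < m \<and> content_init (ltxt xs) m \<subseteq> W \<phi> (the (Psd_op h (ltxt xs) n)) \<longrightarrow>
       W \<phi> (the (Psd_op h (ltxt xs) n)) = W \<phi> (the (Psd_op h (ltxt xs) m))"
      using sc unfolding SemConv_def by blast
    have "content_init (ltxt xs) (card B) \<subseteq> W \<phi> (the (Psd_op h (ltxt xs) (card A)))"
      using cB cA that(4) unfolding Psd_op_def YP_def by simp
    then have "W \<phi> (the (Psd_op h (ltxt xs) (card A))) = W \<phi> (the (Psd_op h (ltxt xs) (card B)))"
      using s lt by blast
    then show ?thesis using cA cB unfolding YP_def Psd_op_def by simp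
  qed
  have semconv: "SemConv \<phi> (\<lambda>i. the (Psd_op h' T i)) T" for T
    unfolding SemConv_def Wq
  proof (intro allI impI)
    fix n m assume nm: "n < m \<and> content_init T m \<subseteq> content_init T n \<union>
       (if content_init T n \<subseteq> YP (content_init T n) then YP (content_init T n) else {})"
    show "content_init T n \<union> (if content_init T n \<subseteq> YP (content_init T n) then YP (content_init T n) else {}) =
      content_init T m \<union> (if content_init T m \<subseteq> YP (content_init T m) then YP (content_init T m) else {})"
    proof (rule sc_transfer[where C="content_init T" and Y="\<lambda>i. YP (content_init T i)"])
      show "\<And>n m. n \<le> m \<Longrightarrow> content_init T n \<subseteq> content_init T m" by (rule ci_mono)
      show "\<And>n m. content_init T n = content_init T m \<Longrightarrow> YP (content_init T n) = YP (content_init T m)"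
        by simp
      show "\<And>n m. n < m \<Longrightarrow> content_init T m \<subseteq> YP (content_init T n) \<Longrightarrow>
          content_init T n \<subseteq> YP (content_init T n) \<Longrightarrow> YP (content_init T m) = YP (content_init T n)"
        using adv ci_finite ci_mono less_imp_le by metis
    qed (use nm in auto)
  qed
  have "SemWb \<phi> (\<lambda>i. the (Psd_op h' T i)) T" for T
    by (rule SemConv_imp_SemWb[OF semconv]) (simp add: Wq)
  moreover have "\<forall>T. content T = L \<longrightarrow> Bc \<phi> (\<lambda>i. the (Psd_op h' T i)) T"
    if bc: "\<forall>T. content T = L \<longrightarrow> Bc \<phi> (\<lambda>i. the (Psd_op h T i)) T" for L
  proof (intro allI impI)
    fix T assume cT: "content T = L"
    show "Bc \<phi> (\<lambda>i. the (Psd_op h' T i)) T"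
    proof (cases "finite L")
      case True
      then obtain M where M: "\<forall>m\<ge>M. content_init T m = L" using ci_finite_eventually cT by blast
      have "YP L = L" if sub: "L \<subseteq> YP L"
      proof -
        let ?T3 = "ltxt (sorted_list_of_set L)"
        have c3: "content ?T3 = L" using True by (simp add: content_ltxt)
        obtain n0 where n0: "\<forall>n\<ge>n0. W \<phi> (the (Psd_op h ?T3 n)) = L"
          using bc c3 unfolding Bc_def by metis
        define j where "j = max n0 (Suc (card L))"
        have cj: "content_init ?T3 j = L" using ci_ltxt_sorted[OF True] unfolding j_def by simp
        have cL: "content_init ?T3 (card L) = L" using ci_ltxt_sorted[OF True] by simp
        have s: "\<forall>n m. n < m \<and> content_init ?T3 m \<subseteq> W \<phi> (the (Psd_op h ?T3 n)) \<longrightarrow>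
           W \<phi> (the (Psd_op h ?T3 n)) = W \<phi> (the (Psd_op h ?T3 m))"
          using sc unfolding SemConv_def by blast
        have "content_init ?T3 j \<subseteq> W \<phi> (the (Psd_op h ?T3 (card L)))"
          using cj cL sub unfolding Psd_op_def YP_def by simp
        moreover have "card L < j" unfolding j_def by simp
        ultimately have "W \<phi> (the (Psd_op h ?T3 (card L))) = W \<phi> (the (Psd_op h ?T3 j))"
          using s by blast
        moreover have "W \<phi> (the (Psd_op h ?T3 (card L))) = YP L" using cL unfolding YP_def Psd_op_def by simp
        moreover have "W \<phi> (the (Psd_op h ?T3 j)) = L" using n0 unfolding j_def by simp
        ultimately show ?thesis by simp
      qed
      then have "\<forall>m\<ge>M. W \<phi> (the (Psd_op h' T m)) = content T" using M cT unfolding Wq by auto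
      then show ?thesis unfolding Bc_def by blast
    next
      case False
      obtain T' where T': "content T' = content T" "\<forall>m. content_init T' (card (content_init T m)) = content_init T m"
        using compress False cT by blast
      obtain n0 where n0: "\<forall>n\<ge>n0. W \<phi> (the (Psd_op h T' n)) = L" using bc T'(1) cT unfolding Bc_def by metis
      obtain M where M: "n0 \<le> card (content_init T M)" using ci_unbounded False cT by blast
      have "W \<phi> (the (Psd_op h' T m)) = content T" if "M \<le> m" for m
      proof -
        let ?C = "content_init T m"
        have "n0 \<le> card ?C" using M card_ci_mono[OF that, of T] by linarith
        then have "W \<phi> (the (Psd_op h T' (card ?C))) = L" using n0 by simp
        then have "YP ?C = L" using T'(2) unfolding YP_def Psd_op_def by simp
        then show ?thesis unfolding Wq using ci_sub[of T m] cT by auto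
      qed
      then show ?thesis unfolding Bc_def by blast
    qed
  qed
  moreover have "computable h'" using t(1) unfolding h'_def .
  moreover have "\<forall>T i. Psd_op h' T i \<noteq> None" unfolding h'_def Psd_op_def by simp
  ultimately show ?thesis by blast
qed


definition enc :: "nat option \<Rightarrow> nat" where
  "enc c = (case c of None \<Rightarrow> 0 | Some n \<Rightarrow> Suc n)"

lemma enc_inj: "enc a = enc b \<longleftrightarrow> a = b"
  by (cases a; cases b) (auto simp: enc_def)

lemma seq_code_eq: "seq_code (init_seg T m) = list_encode (map (\<lambda>i. enc (T i)) [0..<m])"
  unfolding seq_code_def init_seg_def enc_def by (simp add: comp_def)

definition m0 :: "txtT \<Rightarrow> nat \<Rightarrow> nat" where
  "m0 T m = (LEAST j. content_init T j = content_init T m)"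

lemma m0_le: "m0 T m \<le> m"
  unfolding m0_def by (rule Least_le) simp

lemma m0_ci: "content_init T (m0 T m) = content_init T m"
  unfolding m0_def by (rule LeastI[of _ m]) simp

lemma m0_cong: "content_init T n = content_init T m \<Longrightarrow> m0 T n = m0 T m"
  unfolding m0_def by simp

lemma chain_ci: "k \<le> m \<Longrightarrow> content_init T k = content_init T m \<longleftrightarrow>
   (\<forall>j. k \<le> j \<and> j < m \<longrightarrow> content_init T (Suc j) = content_init T j)"
proof (induction m rule: dec_induct)
  case base
  then show ?case by auto
next
  case (step m)
  show ?case
  proof
    assume eq: "content_init T k = content_init T (Suc m)"
    show "\<forall>j. k \<le> j \<and> j < Suc m \<longrightarrow> content_init T (Suc j) = content_init T j"
    proof (intro allI impI)
      fix j assume j: "k \<le> j \<and> j < Suc m"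
      have "content_init T k \<subseteq> content_init T j" using j ci_mono by auto
      moreover have "content_init T j \<subseteq> content_init T (Suc j)" by (rule ci_mono) simp
      moreover have "content_init T (Suc j) \<subseteq> content_init T (Suc m)" using j ci_mono by auto
      ultimately show "content_init T (Suc j) = content_init T j" using eq by blast
    qed
  next
    assume "\<forall>j. k \<le> j \<and> j < Suc m \<longrightarrow> content_init T (Suc j) = content_init T j"
    then show "content_init T k = content_init T (Suc m)" using step by (metis less_Suc_eq)
  qed
qed

lemma newp_ci:
  assumes "j < m"
  shows "newp j (seq_code (init_seg T m)) \<longleftrightarrow> content_init T (Suc j) \<noteq> content_init T j"
proof -
  let ?l = "map (\<lambda>i. enc (T i)) [0..<m]"
  have ln: "lnth i (seq_code (init_seg T m)) = enc (T i)" if "i < m" for i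
    unfolding seq_code_eq using that by (simp add: lnth_enc)
  have "newp j (seq_code (init_seg T m)) \<longleftrightarrow> enc (T j) \<noteq> 0 \<and> (\<forall>i<j. enc (T i) \<noteq> enc (T j))"
    unfolding newp_def using ln assms by auto
  also have "\<dots> \<longleftrightarrow> (\<exists>x. T j = Some x \<and> x \<notin> content_init T j)"
    unfolding content_init_def enc_inj by (auto simp: enc_def split: option.splits)
  also have "\<dots> \<longleftrightarrow> content_init T (Suc j) \<noteq> content_init T j"
    unfolding ci_Suc by auto
  finally show ?thesis .
qed

lemma keyG_correct: "keyG (seq_code (init_seg T m)) = seq_code (init_seg T (m0 T m))"
proof -
  let ?c = "seq_code (init_seg T m)"
  let ?l = "map (\<lambda>i. enc (T i)) [0..<m]"
  have c: "?c = list_encode ?l" by (rule seq_code_eq)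
  have len: "llen ?c = m" unfolding c llen_enc by simp
  have mc: "m \<le> ?c" unfolding c using length_le_enc[of ?l] by simp
  define P where "P k = (\<forall>j<llen ?c. k \<le> j \<longrightarrow> \<not> newp j ?c)" for k
  have P: "k \<le> m \<Longrightarrow> P k \<longleftrightarrow> content_init T k = content_init T m" for k
    unfolding P_def len using chain_ci[of k m T] newp_ci by auto
  have "kstar ?c = (LEAST k. P k)"
  proof -
    have "P m" unfolding P_def len by simp
    then have "\<exists>i<Suc ?c. P i" using mc by (intro exI[of _ m]) simp
    then show ?thesis unfolding kstar_def bmin_def P_def by simp
  qed
  also have "\<dots> = m0 T m"
  proof (rule Least_equality)
    show "P (m0 T m)" using P[OF m0_le] m0_ci by simp
    fix y assume "P y"
    show "m0 T m \<le> y"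
    proof (cases "y \<le> m")
      case True
      then have "content_init T y = content_init T m" using P \<open>P y\<close> by simp
      then show ?thesis unfolding m0_def by (rule Least_le)
    next
      case False
      then show ?thesis using m0_le[of T m] by simp
    qed
  qed
  finally have ks: "kstar ?c = m0 T m" .
  have "keyG ?c = takecode (m0 T m) ?c" by (simp add: keyG_def ks)
  also have "\<dots> = list_encode (take (m0 T m) ?l)" by (simp add: takecode_def c)
  also have "\<dots> = seq_code (init_seg T (m0 T m))"
    unfolding seq_code_eq using m0_le[of T m] by (simp add: take_map)
  finally show ?thesis .
qed

lemma memG_correct: "memG (seq_code (init_seg T m)) x \<longleftrightarrow> x \<in> content_init T m"
proof -
  have ln: "lnth i (seq_code (init_seg T m)) = enc (T i)" if "i < m" for i
    unfolding seq_code_eq using that by (simp add: lnth_enc)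
  have len: "llen (seq_code (init_seg T m)) = m" unfolding seq_code_eq llen_enc by simp
  show ?thesis unfolding memG_def len content_init_def using ln
    by (auto simp: enc_def split: option.splits)
qed

lemma memG_bound: "x \<in> content_init T m \<Longrightarrow> x < seq_code (init_seg T m)"
proof -
  assume "x \<in> content_init T m"
  then obtain i where i: "i < m" "T i = Some x" unfolding content_init_def by auto
  then have "Suc x \<in> set (map (\<lambda>i. enc (T i)) [0..<m])" by (force simp: enc_def)
  then have "Suc x < list_encode (map (\<lambda>i. enc (T i)) [0..<m])" by (rule mem_less_enc)
  then show ?thesis unfolding seq_code_eq by simp
qed


lemma G_case:
  fixes \<phi> :: "nat \<Rightarrow> nat \<Rightarrow> nat option" and h :: "nat \<Rightarrow> nat option"
  assumes acc: "acceptable \<phi>" and hc: "computable h"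
    and tot: "\<forall>T i. G_op h T i \<noteq> None"
    and sc: "\<forall>T. SemConv \<phi> (\<lambda>i. the (G_op h T i)) T"
  shows "\<exists>h'. computable h' \<and> (\<forall>T i. G_op h' T i \<noteq> None) \<and> (\<forall>T. SemWb \<phi> (\<lambda>i. the (G_op h' T i)) T) \<and>
     (\<forall>L. (\<forall>T. content T = L \<longrightarrow> Bc \<phi> (\<lambda>i. the (G_op h T i)) T) \<longrightarrow>
          (\<forall>T. content T = L \<longrightarrow> Bc \<phi> (\<lambda>i. the (G_op h' T i)) T))"
proof -
  obtain t where t: "computable (\<lambda>x. Some (t x))" "\<forall>c. W \<phi> (t c) = dom (psiF \<phi> h keyG memG (\<lambda>c. c) c)"
    using get_t[OF acc hc, of keyG memG "\<lambda>c. c", OF prk_keyG prp_memG] by blast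
  define h' where "h' = (\<lambda>x. Some (t x))"
  define Wp where "Wp T i = W \<phi> (the (G_op h T i))" for T i
  define Y where "Y T i = Wp T (m0 T i)" for T i
  have Wq: "W \<phi> (the (G_op h' T i)) = content_init T i \<union>
     (if content_init T i \<subseteq> Y T i then Y T i else {})" for T i
  proof -
    let ?C = "content_init T i"
    let ?c = "seq_code (init_seg T i)"
    have "h (keyG ?c) = Some (the (G_op h T (m0 T i)))"
      using tot unfolding keyG_correct G_op_def by auto
    moreover have "{y. memG ?c y} = ?C" by (simp add: memG_correct)
    moreover have "\<forall>y\<in>?C. y < ?c" using memG_bound by blast
    ultimately have "dom (psiF \<phi> h keyG memG (\<lambda>c. c) ?c) = ?C \<union> (if ?C \<subseteq> Y T i then Y T i else {})"
      unfolding Y_def Wp_def by (rule dom_psiF)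
    then show ?thesis using t(2) unfolding h'_def G_op_def by simp
  qed
  have scT: "\<forall>n m. n < m \<and> content_init T m \<subseteq> Wp T n \<longrightarrow> Wp T n = Wp T m" for T
    using sc unfolding SemConv_def Wp_def by blast
  have adv: "Y T m = Y T n" if nm: "n < m" and sub: "content_init T m \<subseteq> Y T n" for T n m
  proof (cases "content_init T n = content_init T m")
    case True
    then show ?thesis unfolding Y_def using m0_cong by metis
  next
    case False
    let ?a = "m0 T n" and ?b = "m0 T m"
    have b: "n < ?b"
    proof (rule ccontr)
      assume "\<not> n < ?b"
      then have "content_init T m \<subseteq> content_init T n" using ci_mono[of ?b n T] m0_ci[of T m] by simp
      then show False using False ci_mono[of n m T] nm by auto
    qed
    have "?a < ?b" using m0_le[of T n] b by simp
    moreover have "content_init T ?b \<subseteq> Wp T ?a" using sub m0_ci[of T m] unfolding Y_def by simp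
    ultimately have "Wp T ?a = Wp T ?b" using scT by blast
    then show ?thesis unfolding Y_def by simp
  qed
  have semconv: "SemConv \<phi> (\<lambda>i. the (G_op h' T i)) T" for T
    unfolding SemConv_def Wq
  proof (intro allI impI)
    fix n m assume nm: "n < m \<and> content_init T m \<subseteq> content_init T n \<union>
       (if content_init T n \<subseteq> Y T n then Y T n else {})"
    show "content_init T n \<union> (if content_init T n \<subseteq> Y T n then Y T n else {}) =
      content_init T m \<union> (if content_init T m \<subseteq> Y T m then Y T m else {})"
    proof (rule sc_transfer[where C="content_init T" and Y="Y T"])
      show "\<And>n m. n \<le> m \<Longrightarrow> content_init T n \<subseteq> content_init T m" by (rule ci_mono)
      show "\<And>n m. content_init T n = content_init T m \<Longrightarrow> Y T n = Y T m"
        unfolding Y_def using m0_cong by metis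
      show "\<And>n m. n < m \<Longrightarrow> content_init T m \<subseteq> Y T n \<Longrightarrow> content_init T n \<subseteq> Y T n \<Longrightarrow> Y T m = Y T n"
        using adv by blast
    qed (use nm in auto)
  qed
  have "SemWb \<phi> (\<lambda>i. the (G_op h' T i)) T" for T
    by (rule SemConv_imp_SemWb[OF semconv]) (simp add: Wq)
  moreover have "Bc \<phi> (\<lambda>i. the (G_op h' T i)) T" if bc: "Bc \<phi> (\<lambda>i. the (G_op h T i)) T" for T
  proof -
    let ?L = "content T"
    obtain n0 where n0: "\<forall>n\<ge>n0. Wp T n = ?L" using bc unfolding Bc_def Wp_def by blast
    show ?thesis
    proof (cases "finite ?L")
      case True
      then obtain M where M: "\<forall>m\<ge>M. content_init T m = ?L" using ci_finite_eventually by blast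
      have "W \<phi> (the (G_op h' T m)) = ?L" if "M \<le> m" for m
      proof -
        have Cm: "content_init T m = ?L" using M that by simp
        have "Y T m = ?L" if sub: "?L \<subseteq> Y T m"
        proof -
          let ?a = "m0 T m"
          define j where "j = max n0 (max m (Suc ?a))"
          have "content_init T j = ?L" using M \<open>M \<le> m\<close> unfolding j_def by simp
          then have "content_init T j \<subseteq> Wp T ?a" using sub unfolding Y_def by simp
          moreover have "?a < j" unfolding j_def by simp
          ultimately have "Wp T ?a = Wp T j" using scT by blast
          moreover have "Wp T j = ?L" using n0 unfolding j_def by simp
          ultimately show ?thesis unfolding Y_def by simp
        qed
        then show ?thesis unfolding Wq Cm by auto
      qed
      then show ?thesis unfolding Bc_def by blast
    next
      case False
      obtain M where M: "Suc (card (content_init T n0)) \<le> card (content_init T M)"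
        using ci_unbounded[OF False] by blast
      have "W \<phi> (the (G_op h' T m)) = ?L" if "M \<le> m" for m
      proof -
        have "n0 \<le> m0 T m"
        proof (rule ccontr)
          assume "\<not> n0 \<le> m0 T m"
          then have "content_init T m \<subseteq> content_init T n0" using ci_mono[of "m0 T m" n0 T] m0_ci[of T m] by simp
          then have "card (content_init T m) \<le> card (content_init T n0)" by (rule card_mono[OF ci_finite])
          moreover have "card (content_init T M) \<le> card (content_init T m)" by (rule card_ci_mono[OF that])
          ultimately show False using M by simp
        qed
        then have "Y T m = ?L" using n0 unfolding Y_def by simp
        then show ?thesis unfolding Wq using ci_sub[of T m] by auto
      qed
      then show ?thesis unfolding Bc_def by blast
    qed
  qed
  moreover have "computable h'" using t(1) unfolding h'_def .
  moreover have "\<forall>T i. G_op h' T i \<noteq> None" unfolding h'_def G_op_def by simp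
  ultimately show ?thesis by blast
qed

lemma learns_SemWb_imp: "learns \<phi> SemWb \<beta> h L \<Longrightarrow> learns \<phi> SemConv \<beta> h L"
  unfolding learns_def using SemWb_imp_SemConv by blast

theorem theorem14:
  fixes \<phi> :: "nat \<Rightarrow> nat \<Rightarrow> nat option"
    and \<beta> :: "(nat \<Rightarrow> nat option) \<Rightarrow> txtT \<Rightarrow> nat \<Rightarrow> nat option"
  assumes "acceptable \<phi>"
    and "\<beta> \<in> {G_op, Psd_op, Sd_op}"
  shows "TxtBc \<phi> SemWb \<beta> = TxtBc \<phi> SemConv \<beta>"
proof
  show "TxtBc \<phi> SemWb \<beta> \<subseteq> TxtBc \<phi> SemConv \<beta>"
    unfolding TxtBc_def using learns_SemWb_imp by blast
next
  show "TxtBc \<phi> SemConv \<beta> \<subseteq> TxtBc \<phi> SemWb \<beta>"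
  proof
    fix \<L> assume "\<L> \<in> TxtBc \<phi> SemConv \<beta>"
    then obtain h where hc: "computable h" and hl: "\<forall>L\<in>\<L>. learns \<phi> SemConv \<beta> h L"
      unfolding TxtBc_def by blast
    show "\<L> \<in> TxtBc \<phi> SemWb \<beta>"
    proof (cases "\<L> = {}")
      case True
      then show ?thesis unfolding TxtBc_def using hc by blast
    next
      case False
      then obtain L0 where "L0 \<in> \<L>" by blast
      then have tot: "\<forall>T i. \<beta> h T i \<noteq> None" and sc: "\<forall>T. SemConv \<phi> (\<lambda>i. the (\<beta> h T i)) T"
        using hl unfolding learns_def by auto
      have "\<exists>h'. computable h' \<and> (\<forall>T i. \<beta> h' T i \<noteq> None) \<and> (\<forall>T. SemWb \<phi> (\<lambda>i. the (\<beta> h' T i)) T) \<and>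
         (\<forall>L. (\<forall>T. content T = L \<longrightarrow> Bc \<phi> (\<lambda>i. the (\<beta> h T i)) T) \<longrightarrow>
          (\<forall>T. content T = L \<longrightarrow> Bc \<phi> (\<lambda>i. the (\<beta> h' T i)) T))"
      proof -
        consider (G) "\<beta> = G_op" | (P) "\<beta> = Psd_op" | (S) "\<beta> = Sd_op" using assms(2) by blast
        then show ?thesis
        proof cases
          case G
          have "\<exists>h'. computable h' \<and> (\<forall>T i. G_op h' T i \<noteq> None) \<and> (\<forall>T. SemWb \<phi> (\<lambda>i. the (G_op h' T i)) T) \<and>
            (\<forall>L. (\<forall>T. content T = L \<longrightarrow> Bc \<phi> (\<lambda>i. the (G_op h T i)) T) \<longrightarrow>
             (\<forall>T. content T = L \<longrightarrow> Bc \<phi> (\<lambda>i. the (G_op h' T i)) T))"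
            by (rule G_case[OF assms(1) hc]) (use tot sc G in simp_all)
          then show ?thesis using G by simp
        next
          case P
          have "\<exists>h'. computable h' \<and> (\<forall>T i. Psd_op h' T i \<noteq> None) \<and> (\<forall>T. SemWb \<phi> (\<lambda>i. the (Psd_op h' T i)) T) \<and>
            (\<forall>L. (\<forall>T. content T = L \<longrightarrow> Bc \<phi> (\<lambda>i. the (Psd_op h T i)) T) \<longrightarrow>
             (\<forall>T. content T = L \<longrightarrow> Bc \<phi> (\<lambda>i. the (Psd_op h' T i)) T))"
            by (rule Psd_case[OF assms(1) hc]) (use tot sc P in simp_all)
          then show ?thesis using P by simp
        next
          case S
          have "\<exists>h'. computable h' \<and> (\<forall>T i. Sd_op h' T i \<noteq> None) \<and> (\<forall>T. SemWb \<phi> (\<lambda>i. the (Sd_op h' T i)) T) \<and>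
            (\<forall>L. (\<forall>T. content T = L \<longrightarrow> Bc \<phi> (\<lambda>i. the (Sd_op h T i)) T) \<longrightarrow>
             (\<forall>T. content T = L \<longrightarrow> Bc \<phi> (\<lambda>i. the (Sd_op h' T i)) T))"
            by (rule Sd_case[OF assms(1) hc]) (use tot sc S in simp_all)
          then show ?thesis using S by simp
        qed
      qed
      then obtain h' where h': "computable h'" "\<forall>T i. \<beta> h' T i \<noteq> None" "\<forall>T. SemWb \<phi> (\<lambda>i. the (\<beta> h' T i)) T"
        "\<forall>L. (\<forall>T. content T = L \<longrightarrow> Bc \<phi> (\<lambda>i. the (\<beta> h T i)) T) \<longrightarrow>
          (\<forall>T. content T = L \<longrightarrow> Bc \<phi> (\<lambda>i. the (\<beta> h' T i)) T)"
        by blast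
      have "learns \<phi> SemWb \<beta> h' L" if "L \<in> \<L>" for L
      proof -
        have "\<forall>T. content T = L \<longrightarrow> Bc \<phi> (\<lambda>i. the (\<beta> h T i)) T"
          using hl that unfolding learns_def by blast
        then have "\<forall>T. content T = L \<longrightarrow> Bc \<phi> (\<lambda>i. the (\<beta> h' T i)) T" using h'(4) by blast
        then show ?thesis using h'(2,3) unfolding learns_def by blast
      qed
      then show ?thesis unfolding TxtBc_def using h'(1) by blast
    qed
  qed
qed

end
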